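(* Consider FedAvg with partial device participation as described in the context, and let Assumptions (A1)–(A4) hold. Set $\gamma = \max\{8L/\mu,\, E\}$, $\eta_t = \frac{2}{\mu(\gamma+t)}$, $$B = \sum_{k=1}^N p_k^2\sigma_k^2 + 6L\Gamma + 8(E-1)^2 G^2, \qquad C = \frac{4}{K}E^2G^2 .$$ Let $\mathcal{R}$ be an $L_{\mathcal{R}}$-Lipschitz data reconstruction function and $\mathbf{x}$ the private data. Then for every round $t\ge 1$, $$\mathbb{E}\,\|\mathbf{x} - \mathcal{R}(\mathbf{w}_t)\|^2 \;\le\; 2\,\mathbb{E}\,\|\mathbf{x} - \mathcal{R}(\mathbf{w}^\star)\|^2 + \frac{2L_{\mathcal{R}}^2}{\gamma + t}\left( \frac{4(B+C)}{\mu^2} + (\gamma+1)\,\mathbb{E}\,\|\mathbf{w}_1 - \mathbf{w}^\star\|^2 \right).$$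
   Context: Federated setting: there are $N$ devices with weights $p_k \ge 0$, $\sum_{k=1}^N p_k = 1$. Device $k$ holds a finite dataset $D^k$ and has local objective $\mathcal{L}_k(\mathbf{w}) = \frac{1}{n_k}\sum_{j=1}^{n_k} \ell(\mathbf{w}; (\mathbf{x}^k_j, y^k_j))$; for a sample $\xi$ of $D^k$, $\nabla\mathcal{L}_k(\mathbf{w},\xi)$ denotes the stochastic gradient at that sample. The global objective is $\mathcal{L}(\mathbf{w}) = \sum_{k=1}^N p_k \mathcal{L}_k(\mathbf{w})$, with minimizer $\mathbf{w}^\star$ and minimum value $\mathcal{L}^\ast$; $\mathcal{L}_k^\ast$ is the minimum of $\mathcal{L}_k$, and $\Gamma = \mathcal{L}^\ast - \sum_{k=1}^N p_k \mathcal{L}_k^\ast$. FedAvg with partial participation: fix integers $E\ge 1$ and $1\le K \le N$, and let $\mathcal{I}_E = \{nE : n=1,2,\dots\}$. All devices start at a common $\mathbf{w}_1^k = \mathbf{w}_1$. For $t=1,2,\dots$, each device computes $\mathbf{v}^k_{t+1} = \mathbf{w}^k_t - \eta_t \nabla \mathcal{L}_k(\mathbf{w}^k_t, \xi^k_t)$ with $\xi^k_t$ drawn uniformly from $D^k$. If $t+1\notin\mathcal{I}_E$ then $\mathbf{w}^k_{t+1} = \mathbf{v}^k_{t+1}$. If $t+1\in\mathcal{I}_E$, the server draws a multiset $\mathcal{S}_{t+1}$ of $K$ device indices, independently and with replacement according to the distribution $(p_1,\dots,p_N)$, and sets $\mathbf{w}^k_{t+1} = \frac{1}{K}\sum_{j\in\mathcal{S}_{t+1}}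 \mathbf{v}^j_{t+1}$ (counted with multiplicity) for all $k$. The global model is $\mathbf{w}_t = \sum_{k=1}^N p_k \mathbf{w}^k_t$ (which equals the aggregated model at aggregation steps). Assumptions: (A1) each $\mathcal{L}_k$ is $L$-smooth; (A2) each $\mathcal{L}_k$ is $\mu$-strongly convex with $\mu>0$; (A3) $\mathbb{E}\|\nabla\mathcal{L}_k(\mathbf{w}^k_t,\xi^k_t) - \nabla\mathcal{L}_k(\mathbf{w}^k_t)\|^2 \le \sigma_k^2$ for all $k,t$; (A4) $\mathbb{E}\|\nabla\mathcal{L}_k(\mathbf{w}^k_t,\xi^k_t)\|^2 \le G^2$ for all $k,t$. Reconstruction: private data $\mathbf{x}\in[0,1]^d$; $\mathcal{R}$ maps model parameters to $\mathbb{R}^d$, may be randomized with randomness independent of training, and for every realization satisfies $\|\mathcal{R}(\mathbf{v}) - \mathcal{R}(\mathbf{w})\| \le L_{\mathcal{R}}\|\mathbf{v}-\mathbf{w}\|$ for all $\mathbf{v},\mathbf{w}$. Expectations are over all randomness (stochastic gradients, device sampling, and randomness of $\mathcal{R}$). *)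

theory Defs
  imports "HOL-Analysis.Analysis" "HOL-Probability.Probability"
begin

definition L_smooth :: "real \<Rightarrow> ('a::real_inner \<Rightarrow> real) \<Rightarrow> bool" where
  "L_smooth L f \<longleftrightarrow>
     (\<exists>D. (\<forall>w. GDERIV f w :> D w) \<and> (\<forall>v w. norm (D v - D w) \<le> L * norm (v - w)))"

definition strongly_convex :: "real \<Rightarrow> ('a::real_inner \<Rightarrow> real) \<Rightarrow> bool" where
  "strongly_convex \<mu> f \<longleftrightarrow>
     (\<forall>x y u. 0 \<le> u \<and> u \<le> 1 \<longrightarrow>
        f (u *\<^sub>R x + (1 - u) *\<^sub>R y)
          \<le> u * f x + (1 - u) * f y - \<mu> / 2 * u * (1 - u) * (norm (x - y))\<^sup>2)"

definition local_loss :: "('k \<Rightarrow> nat) \<Rightarrow> ('k \<Rightarrow> nat \<Rightarrow> 'p \<Rightarrow> real) \<Rightarrow> 'k \<Rightarrow> 'p \<Rightarrow> real" where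
  "local_loss n f k w = (\<Sum>j<n k. f k j w) / real (n k)"

definition local_grad :: "('k \<Rightarrow> nat) \<Rightarrow> ('k \<Rightarrow> nat \<Rightarrow> 'p \<Rightarrow> 'p) \<Rightarrow> 'k \<Rightarrow> 'p \<Rightarrow> 'p::real_vector" where
  "local_grad n g k w = (1 / real (n k)) *\<^sub>R (\<Sum>j<n k. g k j w)"

definition global_loss :: "'k::finite pmf \<Rightarrow> ('k \<Rightarrow> nat) \<Rightarrow> ('k \<Rightarrow> nat \<Rightarrow> 'p \<Rightarrow> real) \<Rightarrow> 'p \<Rightarrow> real" where
  "global_loss P n f w = (\<Sum>k\<in>UNIV. pmf P k * local_loss n f k w)"

definition global_model :: "'k::finite pmf \<Rightarrow> ('k \<Rightarrow> 'p) \<Rightarrow> 'p::real_vector" where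
  "global_model P W = (\<Sum>k\<in>UNIV. pmf P k *\<^sub>R W k)"

text \<open>Each device samples its index uniformly and independently; if t+1 is a multiple of E,
  the server samples K indices i.i.d. from P (with replacement) and averages.\<close>
definition fedavg_step ::
  "'k::finite pmf \<Rightarrow> ('k \<Rightarrow> nat) \<Rightarrow> ('k \<Rightarrow> nat \<Rightarrow> 'p \<Rightarrow> 'p) \<Rightarrow> (nat \<Rightarrow> real) \<Rightarrow> nat \<Rightarrow> nat
    \<Rightarrow> nat \<Rightarrow> ('k \<Rightarrow> 'p) \<Rightarrow> ('k \<Rightarrow> 'p::real_vector) pmf" where
  "fedavg_step P n g eta E K t W =
     Pi_pmf UNIV 0 (\<lambda>k. pmf_of_set {..<n k}) \<bind> (\<lambda>\<xi>.
       let V = (\<lambda>k. W k - eta t *\<^sub>R g k (\<xi> k) (W k)) in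
       (if E dvd (t + 1)
        then replicate_pmf K P \<bind> (\<lambda>S. return_pmf (\<lambda>k. (1 / real K) *\<^sub>R (\<Sum>j<K. V (S ! j))))
        else return_pmf V))"

primrec fedavg_aux ::
  "'k::finite pmf \<Rightarrow> ('k \<Rightarrow> nat) \<Rightarrow> ('k \<Rightarrow> nat \<Rightarrow> 'p \<Rightarrow> 'p) \<Rightarrow> (nat \<Rightarrow> real) \<Rightarrow> nat \<Rightarrow> nat
    \<Rightarrow> 'p \<Rightarrow> nat \<Rightarrow> ('k \<Rightarrow> 'p::real_vector) pmf" where
  "fedavg_aux P n g eta E K w1 0 = return_pmf (\<lambda>_. w1)"
| "fedavg_aux P n g eta E K w1 (Suc m) = fedavg_aux P n g eta E K w1 m \<bind> fedavg_step P n g eta E K (Suc m)"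

definition fedavg_round ::
  "'k::finite pmf \<Rightarrow> ('k \<Rightarrow> nat) \<Rightarrow> ('k \<Rightarrow> nat \<Rightarrow> 'p \<Rightarrow> 'p) \<Rightarrow> (nat \<Rightarrow> real) \<Rightarrow> nat \<Rightarrow> nat
    \<Rightarrow> 'p \<Rightarrow> nat \<Rightarrow> ('k \<Rightarrow> 'p::real_vector) pmf" where
  "fedavg_round P n g eta E K w1 t = fedavg_aux P n g eta E K w1 (t - 1)"

end

theory Submission
  imports Defs
begin


abbreviation fsupp :: "'a pmf \<Rightarrow> bool" where "fsupp p \<equiv> finite (set_pmf p)"

lemma E_sum:
  fixes f :: "'a \<Rightarrow> 'b::{banach, second_countable_topology}"
  assumes "fsupp p"
  shows "measure_pmf.expectation p f = (\<Sum>x\<in>set_pmf p. pmf p x *\<^sub>R f x)"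
  using assms by (intro integral_measure_pmf) auto

lemma E_bind:
  fixes h :: "'b \<Rightarrow> 'c::{banach, second_countable_topology}"
  assumes "fsupp p" "\<And>x. x \<in> set_pmf p \<Longrightarrow> fsupp (f x)"
  shows "measure_pmf.expectation (p \<bind> f) h = measure_pmf.expectation p (\<lambda>a. measure_pmf.expectation (f a) h)"
  using assms by (subst pmf_expectation_bind[of "set_pmf p"]) (auto simp: E_sum)

lemma fsupp_bind: "fsupp p \<Longrightarrow> (\<And>x. x \<in> set_pmf p \<Longrightarrow> fsupp (f x)) \<Longrightarrow> fsupp (p \<bind> f)"
  by auto

lemma E_mono:
  fixes f g :: "'a \<Rightarrow> real"
  assumes "fsupp p" "\<And>x. x \<in> set_pmf p \<Longrightarrow> f x \<le> g x"
  shows "measure_pmf.expectation p f \<le> measure_pmf.expectation p g"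
  using assms by (intro integral_mono_AE) (auto intro: integrable_measure_pmf_finite AE_pmfI)

lemma E_nonneg:
  fixes f :: "'a \<Rightarrow> real"
  assumes "\<And>x. x \<in> set_pmf p \<Longrightarrow> 0 \<le> f x"
  shows "0 \<le> measure_pmf.expectation p f"
  using assms by (intro integral_nonneg_AE) (auto intro: AE_pmfI)

lemma E_add:
  fixes f g :: "'a \<Rightarrow> 'b::{banach, second_countable_topology}"
  assumes "fsupp p"
  shows "measure_pmf.expectation p (\<lambda>x. f x + g x) = measure_pmf.expectation p f + measure_pmf.expectation p g"
  using assms by (simp add: E_sum scaleR_add_right sum.distrib)

lemma E_diff:
  fixes f g :: "'a \<Rightarrow> 'b::{banach, second_countable_topology}"
  assumes "fsupp p"
  shows "measure_pmf.expectation p (\<lambda>x. f x - g x) = measure_pmf.expectation p f - measure_pmf.expectation p g"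
  using assms by (simp add: E_sum scaleR_diff_right sum_subtractf)

lemma E_sumf:
  fixes f :: "'i \<Rightarrow> 'a \<Rightarrow> 'b::{banach, second_countable_topology}"
  assumes "fsupp p"
  shows "measure_pmf.expectation p (\<lambda>x. \<Sum>i\<in>I. f i x) = (\<Sum>i\<in>I. measure_pmf.expectation p (f i))"
  using assms by (simp add: E_sum scaleR_sum_right sum.swap[of _ I])

lemma E_cmult:
  fixes f :: "'a \<Rightarrow> real"
  shows "measure_pmf.expectation p (\<lambda>x. c * f x) = c * measure_pmf.expectation p f"
  by simp

lemma E_const: "measure_pmf.expectation p (\<lambda>x. c::real) = c"
  by simp

lemma E_inner:
  fixes Y :: "'a \<Rightarrow> 'b::{real_inner, banach, second_countable_topology}"
  assumes "fsupp p"
  shows "measure_pmf.expectation p (\<lambda>x. inner a (Y x)) = inner a (measure_pmf.expectation p Y)"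
  using assms by (simp add: E_sum inner_sum_right)

lemma E_scaleR:
  fixes Y :: "'a \<Rightarrow> 'b::{real_normed_vector, banach, second_countable_topology}"
  shows "measure_pmf.expectation p (\<lambda>x. c *\<^sub>R Y x) = c *\<^sub>R measure_pmf.expectation p Y"
  by simp

lemma E_sq_shift:
  fixes Y :: "'a \<Rightarrow> 'b::{real_inner, banach, second_countable_topology}"
  assumes "fsupp p" "measure_pmf.expectation p Y = 0"
  shows "measure_pmf.expectation p (\<lambda>x. (norm (a + Y x))\<^sup>2) = (norm a)\<^sup>2 + measure_pmf.expectation p (\<lambda>x. (norm (Y x))\<^sup>2)"
proof -
  have "\<And>x. (norm (a + Y x))\<^sup>2 = ((norm a)\<^sup>2 + (norm (Y x))\<^sup>2) + 2 * inner a (Y x)"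
    by (simp add: power2_norm_eq_inner inner_add_left inner_add_right inner_commute)
  hence "measure_pmf.expectation p (\<lambda>x. (norm (a + Y x))\<^sup>2)
     = measure_pmf.expectation p (\<lambda>x. ((norm a)\<^sup>2 + (norm (Y x))\<^sup>2) + 2 * inner a (Y x))" by simp
  also have "\<dots> = (norm a)\<^sup>2 + measure_pmf.expectation p (\<lambda>x. (norm (Y x))\<^sup>2) + 2 * inner a (measure_pmf.expectation p Y)"
    using assms(1) by (simp add: E_add E_inner)
  finally show ?thesis using assms(2) by simp
qed




lemma fsupp_Pi: "finite A \<Longrightarrow> (\<And>k. k \<in> A \<Longrightarrow> fsupp (Pk k)) \<Longrightarrow> fsupp (Pi_pmf A dflt Pk)"
  by (subst set_Pi_pmf) (auto intro!: finite_PiE_dflt)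

lemma fsupp_rep: "fsupp p \<Longrightarrow> fsupp (replicate_pmf m p)"
proof -
  assume "fsupp p"
  have "{xs\<in>lists (set_pmf p). length xs = m} = {xs. set xs \<subseteq> set_pmf p \<and> length xs = m}" by auto
  thus ?thesis using \<open>fsupp p\<close> by (simp add: set_replicate_pmf finite_lists_length_eq)
qed

lemma E_Pi_component:
  fixes h :: "'a \<Rightarrow> 'b::{banach, second_countable_topology}"
  assumes "finite A" "k \<in> A"
  shows "measure_pmf.expectation (Pi_pmf A dflt Pk) (\<lambda>\<xi>. h (\<xi> k)) = measure_pmf.expectation (Pk k) h"
proof -
  have "measure_pmf.expectation (Pi_pmf A dflt Pk) (\<lambda>\<xi>. h (\<xi> k))
      = measure_pmf.expectation (map_pmf (\<lambda>f. f k) (Pi_pmf A dflt Pk)) h" by simp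
  also have "\<dots> = measure_pmf.expectation (Pk k) h" using assms by (subst Pi_pmf_component) auto
  finally show ?thesis .
qed

lemma E_Pi_sq:
  fixes Z :: "'k \<Rightarrow> 'a \<Rightarrow> 'b::{real_inner, banach, second_countable_topology}"
  assumes "finite A" "\<And>k. k\<in>A \<Longrightarrow> fsupp (Pk k)" "\<And>k. k\<in>A \<Longrightarrow> measure_pmf.expectation (Pk k) (Z k) = 0"
  shows "measure_pmf.expectation (Pi_pmf A dflt Pk) (\<lambda>\<xi>. (norm (a + (\<Sum>k\<in>A. Z k (\<xi> k))))\<^sup>2)
       = (norm a)\<^sup>2 + (\<Sum>k\<in>A. measure_pmf.expectation (Pk k) (\<lambda>y. (norm (Z k y))\<^sup>2))"
  using assms
proof (induction A arbitrary: a rule: finite_induct)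
  case empty
  then show ?case by simp
next
  case (insert x A)
  have fA: "fsupp (Pi_pmf A dflt Pk)" using insert by (intro fsupp_Pi) auto
  have fx: "fsupp (Pk x)" using insert by auto
  have eq: "\<And>y f. (\<Sum>k\<in>insert x A. Z k ((f(x:=y)) k)) = Z x y + (\<Sum>k\<in>A. Z k (f k))"
    using insert by (simp add: sum.insert) (intro sum.cong, auto)
  have eq2: "\<And>y f. (\<Sum>k\<in>A. Z k (if k = x then y else f k)) = (\<Sum>k\<in>A. Z k (f k))"
    using insert by (intro sum.cong) auto
  have "measure_pmf.expectation (Pi_pmf (insert x A) dflt Pk) (\<lambda>\<xi>. (norm (a + (\<Sum>k\<in>insert x A. Z k (\<xi> k))))\<^sup>2)
     = measure_pmf.expectation (Pk x) (\<lambda>y. measure_pmf.expectation (Pi_pmf A dflt Pk)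
          (\<lambda>f. (norm ((a + Z x y) + (\<Sum>k\<in>A. Z k (f k))))\<^sup>2))"
    using insert fA fx
    by (subst Pi_pmf_insert') (auto simp: E_bind fsupp_bind eq eq2 add.assoc)
  also have "\<dots> = measure_pmf.expectation (Pk x) (\<lambda>y. (norm (a + Z x y))\<^sup>2
          + (\<Sum>k\<in>A. measure_pmf.expectation (Pk k) (\<lambda>y. (norm (Z k y))\<^sup>2)))"
    using insert by (subst insert.IH) auto
  also have "\<dots> = (norm a)\<^sup>2 + measure_pmf.expectation (Pk x) (\<lambda>y. (norm (Z x y))\<^sup>2)
          + (\<Sum>k\<in>A. measure_pmf.expectation (Pk k) (\<lambda>y. (norm (Z k y))\<^sup>2))"
    using fx insert by (simp add: E_add E_sq_shift)
  finally show ?case using insert by (simp add: sum.insert add.assoc)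
qed

lemma E_rep_sq:
  fixes Y :: "'a \<Rightarrow> 'b::{real_inner, banach, second_countable_topology}"
  assumes "fsupp p" "measure_pmf.expectation p Y = 0"
  shows "measure_pmf.expectation (replicate_pmf m p) (\<lambda>S. (norm (a + (\<Sum>j<m. Y (S ! j))))\<^sup>2)
       = (norm a)\<^sup>2 + real m * measure_pmf.expectation p (\<lambda>y. (norm (Y y))\<^sup>2)"
proof (induction m arbitrary: a)
  case 0
  then show ?case by simp
next
  case (Suc m)
  have eq: "\<And>y xs. (\<Sum>j<Suc m. Y ((y # xs) ! j)) = Y y + (\<Sum>j<m. Y (xs ! j))"
    by (subst sum.lessThan_Suc_shift) simp
  have "measure_pmf.expectation (replicate_pmf (Suc m) p) (\<lambda>S. (norm (a + (\<Sum>j<Suc m. Y (S ! j))))\<^sup>2)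
    = measure_pmf.expectation p (\<lambda>y. measure_pmf.expectation (replicate_pmf m p)
          (\<lambda>xs. (norm ((a + Y y) + (\<Sum>j<m. Y (xs ! j))))\<^sup>2))"
    using assms fsupp_rep[OF assms(1)] by (auto simp: E_bind fsupp_bind eq add.assoc simp del: sum.lessThan_Suc)
  also have "\<dots> = measure_pmf.expectation p (\<lambda>y. (norm (a + Y y))\<^sup>2 + real m * measure_pmf.expectation p (\<lambda>y. (norm (Y y))\<^sup>2))"
    by (subst Suc.IH) auto
  also have "\<dots> = (norm a)\<^sup>2 + real (Suc m) * measure_pmf.expectation p (\<lambda>y. (norm (Y y))\<^sup>2)"
    using assms by (simp add: E_add E_sq_shift algebra_simps)
  finally show ?case .
qed




lemma norm_add_sq:
  fixes u v :: "'p::real_inner"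
  shows "(norm (u + v))\<^sup>2 = (norm u)\<^sup>2 + 2 * inner u v + (norm v)\<^sup>2"
  by (simp add: power2_norm_eq_inner inner_add_left inner_add_right inner_commute)

lemma norm_diff_sq:
  fixes u v :: "'p::real_inner"
  shows "(norm (u - v))\<^sup>2 = (norm u)\<^sup>2 - 2 * inner u v + (norm v)\<^sup>2"
  by (simp add: power2_norm_eq_inner inner_diff_left inner_diff_right inner_commute)

lemma wvar:
  fixes a :: "'k \<Rightarrow> 'p::real_inner"
  assumes "finite A" "sum p A = 1"
  shows "(\<Sum>k\<in>A. p k * (norm (a k - c))\<^sup>2)
       = (\<Sum>k\<in>A. p k * (norm (a k - (\<Sum>j\<in>A. p j *\<^sub>R a j)))\<^sup>2) + (norm ((\<Sum>j\<in>A. p j *\<^sub>R a j) - c))\<^sup>2"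
proof -
  define m where "m = (\<Sum>j\<in>A. p j *\<^sub>R a j)"
  have e: "\<And>k. (norm (a k - c))\<^sup>2 = (norm (a k - m))\<^sup>2 + 2 * inner (a k - m) (m - c) + (norm (m - c))\<^sup>2"
  proof -
    fix k have "a k - c = (a k - m) + (m - c)" by simp
    hence "(norm (a k - c))\<^sup>2 = (norm ((a k - m) + (m - c)))\<^sup>2" by simp
    also have "\<dots> = (norm (a k - m))\<^sup>2 + 2 * inner (a k - m) (m - c) + (norm (m - c))\<^sup>2"
      by (rule norm_add_sq)
    finally show "(norm (a k - c))\<^sup>2 = (norm (a k - m))\<^sup>2 + 2 * inner (a k - m) (m - c) + (norm (m - c))\<^sup>2" .
  qed
  have z: "(\<Sum>k\<in>A. p k * inner (a k - m) (m - c)) = 0"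
  proof -
    have "(\<Sum>k\<in>A. p k * inner (a k - m) (m - c)) = inner (\<Sum>k\<in>A. p k *\<^sub>R (a k - m)) (m - c)"
      by (simp add: inner_sum_left)
    also have "(\<Sum>k\<in>A. p k *\<^sub>R (a k - m)) = m - (\<Sum>k\<in>A. p k) *\<^sub>R m"
      by (simp add: scaleR_diff_right sum_subtractf scaleR_sum_left m_def)
    finally show ?thesis using assms by simp
  qed
  have "(\<Sum>k\<in>A. p k * (norm (a k - c))\<^sup>2)
      = (\<Sum>k\<in>A. p k * (norm (a k - m))\<^sup>2) + 2 * (\<Sum>k\<in>A. p k * inner (a k - m) (m - c))
        + (\<Sum>k\<in>A. p k) * (norm (m - c))\<^sup>2"
  proof -
    have "(\<Sum>k\<in>A. p k * (norm (a k - c))\<^sup>2) = (\<Sum>k\<in>A. p k * (norm (a k - m))\<^sup>2 + 2 * (p k * inner (a k - m) (m - c))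
        + p k * (norm (m - c))\<^sup>2)"
      by (intro sum.cong refl) (simp only: e distrib_left mult.left_commute)
    also have "\<dots> = (\<Sum>k\<in>A. p k * (norm (a k - m))\<^sup>2) + 2 * (\<Sum>k\<in>A. p k * inner (a k - m) (m - c))
        + (\<Sum>k\<in>A. p k) * (norm (m - c))\<^sup>2"
      by (simp only: sum.distrib sum_distrib_left[symmetric] sum_distrib_right[symmetric])
    finally show ?thesis .
  qed
  thus ?thesis using z assms by (simp add: m_def)
qed

lemma line_deriv:
  fixes F :: "'p::real_inner \<Rightarrow> real"
  assumes "\<And>w. GDERIV F w :> Df w"
  shows "((\<lambda>u. F (x + u *\<^sub>R d)) has_real_derivative (inner (Df (x + u *\<^sub>R d)) d)) (at u)"
proof -
  have l: "((\<lambda>u. x + u *\<^sub>R d) has_derivative (\<lambda>h. h *\<^sub>R d)) (at u)"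
    by (auto intro!: derivative_eq_intros)
  have "((\<lambda>u. F (x + u *\<^sub>R d)) has_derivative (\<lambda>h. inner (h *\<^sub>R d) (Df (x + u *\<^sub>R d)))) (at u)"
    using has_derivative_compose[OF l, of F] assms unfolding gderiv_def by blast
  moreover have "(\<lambda>h. inner (h *\<^sub>R d) (Df (x + u *\<^sub>R d))) = (*) (inner (Df (x + u *\<^sub>R d)) d)"
    by (auto simp: fun_eq_iff inner_commute)
  ultimately show ?thesis by (simp add: has_field_derivative_def)
qed

lemma sc_first_order:
  fixes F :: "'p::real_inner \<Rightarrow> real"
  assumes D: "\<And>w. GDERIV F w :> Df w" and sc: "strongly_convex \<mu> F"
  shows "F x + inner (Df x) (y - x) + \<mu> / 2 * (norm (y - x))\<^sup>2 \<le> F y"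
proof -
  define d where "d = y - x"
  define \<phi> where "\<phi> = (\<lambda>u. F (x + u *\<^sub>R d))"
  have "(\<phi> has_real_derivative (inner (Df x) d)) (at 0)"
    using line_deriv[OF D, of x d 0] by (simp add: \<phi>_def)
  hence "((\<lambda>u. (\<phi> u - \<phi> 0) / (u - 0)) \<longlongrightarrow> inner (Df x) d) (at 0)"
    by (simp add: has_field_derivative_iff)
  hence t1: "((\<lambda>u. (\<phi> u - \<phi> 0) / u) \<longlongrightarrow> inner (Df x) d) (at_right 0)"
    by (auto intro: tendsto_mono[OF at_le])
  have t2: "((\<lambda>u. F y - F x - \<mu> / 2 * (1 - u) * (norm d)\<^sup>2) \<longlongrightarrow> F y - F x - \<mu> / 2 * (1 - 0) * (norm d)\<^sup>2) (at_right 0)"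
    by (intro tendsto_intros)
  have ev: "eventually (\<lambda>u. (\<phi> u - \<phi> 0) / u \<le> F y - F x - \<mu> / 2 * (1 - u) * (norm d)\<^sup>2) (at_right 0)"
  proof -
    have "eventually (\<lambda>u. u \<in> {0<..<(1::real)}) (at_right 0)"
      by (rule eventually_at_right_real) simp
    then show ?thesis
  proof (rule eventually_mono)
    fix u :: real assume u: "u \<in> {0<..<1}"
    have "F (u *\<^sub>R y + (1 - u) *\<^sub>R x) \<le> u * F y + (1 - u) * F x - \<mu> / 2 * u * (1 - u) * (norm (y - x))\<^sup>2"
      using sc u unfolding strongly_convex_def by auto
    moreover have "u *\<^sub>R y + (1 - u) *\<^sub>R x = x + u *\<^sub>R d"
      by (simp add: d_def algebra_simps)
    ultimately have "\<phi> u - \<phi> 0 \<le> u * (F y - F x - \<mu> / 2 * (1 - u) * (norm d)\<^sup>2)"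
      by (simp add: \<phi>_def d_def algebra_simps)
    thus "(\<phi> u - \<phi> 0) / u \<le> F y - F x - \<mu> / 2 * (1 - u) * (norm d)\<^sup>2"
      using u by (simp add: divide_le_eq mult.commute)
  qed
  qed
  have "inner (Df x) d \<le> F y - F x - \<mu> / 2 * (1 - 0) * (norm d)\<^sup>2"
    by (rule tendsto_le[OF trivial_limit_at_right_real t2 t1 ev])
  thus ?thesis by (simp add: d_def)
qed

lemma descent:
  fixes F :: "'p::real_inner \<Rightarrow> real"
  assumes D: "\<And>w. GDERIV F w :> Df w" and lip: "\<And>v w. norm (Df v - Df w) \<le> L * norm (v - w)"
  shows "F y \<le> F x + inner (Df x) (y - x) + L / 2 * (norm (y - x))\<^sup>2"
proof -
  define d where "d = y - x"
  define \<psi> where "\<psi> = (\<lambda>u. F (x + u *\<^sub>R d) - u * inner (Df x) d - L / 2 * u\<^sup>2 * (norm d)\<^sup>2)"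
  have "\<psi> 1 \<le> \<psi> 0"
  proof (rule DERIV_nonpos_imp_nonincreasing[of 0 1 \<psi>])
    fix u :: real assume u: "0 \<le> u" "u \<le> 1"
    have "(\<psi> has_real_derivative (inner (Df (x + u *\<^sub>R d)) d - inner (Df x) d - L / 2 * (2 * u) * (norm d)\<^sup>2)) (at u)"
      unfolding \<psi>_def
      by (auto intro!: derivative_eq_intros line_deriv[OF D] simp: power2_eq_square)
    moreover have "inner (Df (x + u *\<^sub>R d)) d - inner (Df x) d - L / 2 * (2 * u) * (norm d)\<^sup>2 \<le> 0"
    proof -
      have "inner (Df (x + u *\<^sub>R d)) d - inner (Df x) d = inner (Df (x + u *\<^sub>R d) - Df x) d"
        by (simp add: inner_diff_left)
      also have "\<dots> \<le> norm (Df (x + u *\<^sub>R d) - Df x) * norm d"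
        by (rule norm_cauchy_schwarz)
      also have "\<dots> \<le> (L * norm (u *\<^sub>R d)) * norm d"
        using lip[of "x + u *\<^sub>R d" x] by (intro mult_right_mono) auto
      also have "\<dots> = L / 2 * (2 * u) * (norm d)\<^sup>2"
        using u by (simp add: power2_eq_square)
      finally show ?thesis by simp
    qed
    ultimately show "\<exists>y. (\<psi> has_real_derivative y) (at u) \<and> y \<le> 0" by blast
  qed simp
  thus ?thesis by (simp add: \<psi>_def d_def)
qed




lemma core:
  fixes p :: "'k::finite \<Rightarrow> real" and F :: "'k \<Rightarrow> 'p::real_inner \<Rightarrow> real"
    and Df :: "'k \<Rightarrow> 'p \<Rightarrow> 'p" and Fs :: "'k \<Rightarrow> real" and W :: "'k \<Rightarrow> 'p"
  assumes p0: "\<And>k. 0 \<le> p k" and p1: "sum p UNIV = 1"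
    and sc: "\<And>k x y. F k x + inner (Df k x) (y - x) + \<mu> / 2 * (norm (y - x))\<^sup>2 \<le> F k y"
    and mu: "0 \<le> \<mu>"
    and gb: "\<And>k x. (norm (Df k x))\<^sup>2 \<le> 2 * L * (F k x - Fs k)"
    and opt: "\<And>w. (\<Sum>k\<in>UNIV. p k * F k ws) \<le> (\<Sum>k\<in>UNIV. p k * F k w)"
    and L0: "0 \<le> L" and eta0: "0 < \<eta>" and etaL: "4 * L * \<eta> \<le> 1"
    and Gam0: "0 \<le> (\<Sum>k\<in>UNIV. p k * F k ws) - (\<Sum>k\<in>UNIV. p k * Fs k)"
  shows "(norm ((\<Sum>k\<in>UNIV. p k *\<^sub>R W k) - \<eta> *\<^sub>R (\<Sum>k\<in>UNIV. p k *\<^sub>R Df k (W k)) - ws))\<^sup>2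
     \<le> (1 - \<mu> * \<eta>) * (norm ((\<Sum>k\<in>UNIV. p k *\<^sub>R W k) - ws))\<^sup>2
       + 6 * L * \<eta>\<^sup>2 * ((\<Sum>k\<in>UNIV. p k * F k ws) - (\<Sum>k\<in>UNIV. p k * Fs k))
       + 2 * (\<Sum>k\<in>UNIV. p k * (norm (W k - (\<Sum>j\<in>UNIV. p j *\<^sub>R W j)))\<^sup>2)"
proof -
  define wb where "wb = (\<Sum>k\<in>UNIV. p k *\<^sub>R W k)"
  define Gb where "Gb = (\<Sum>k\<in>UNIV. p k *\<^sub>R Df k (W k))"
  define A0 where "A0 = (norm (wb - ws))\<^sup>2"
  define Dv where "Dv = (\<Sum>k\<in>UNIV. p k * (norm (W k - wb))\<^sup>2)"
  define Gsq where "Gsq = (\<Sum>k\<in>UNIV. p k * (norm (Df k (W k)))\<^sup>2)"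
  define P1 where "P1 = (\<Sum>k\<in>UNIV. p k * inner (wb - W k) (Df k (W k)))"
  define P2 where "P2 = (\<Sum>k\<in>UNIV. p k * inner (W k - ws) (Df k (W k)))"
  define FW where "FW = (\<Sum>k\<in>UNIV. p k * F k (W k))"
  define Fws where "Fws = (\<Sum>k\<in>UNIV. p k * F k ws)"
  define Fwb where "Fwb = (\<Sum>k\<in>UNIV. p k * F k wb)"
  define FS where "FS = (\<Sum>k\<in>UNIV. p k * Fs k)"
  define Msq where "Msq = (\<Sum>k\<in>UNIV. p k * (norm (W k - ws))\<^sup>2)"
  define Hsq where "Hsq = (\<Sum>k\<in>UNIV. p k * (norm (Df k wb))\<^sup>2)"
  define Q where "Q = (\<Sum>k\<in>UNIV. p k * inner (Df k wb) (W k - wb))"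
  have Dv0: "0 \<le> Dv" unfolding Dv_def using p0 by (intro sum_nonneg) auto
  have a: "(norm (wb - \<eta> *\<^sub>R Gb - ws))\<^sup>2 = A0 - 2 * \<eta> * P1 - 2 * \<eta> * P2 + \<eta>\<^sup>2 * (norm Gb)\<^sup>2"
  proof -
    have "wb - \<eta> *\<^sub>R Gb - ws = (wb - ws) - \<eta> *\<^sub>R Gb" by simp
    hence "(norm (wb - \<eta> *\<^sub>R Gb - ws))\<^sup>2 = A0 - 2 * inner (wb - ws) (\<eta> *\<^sub>R Gb) + (norm (\<eta> *\<^sub>R Gb))\<^sup>2"
      by (simp only: norm_diff_sq A0_def)
    moreover have "inner (wb - ws) Gb = P1 + P2"
    proof -
      have "inner (wb - ws) Gb = (\<Sum>k\<in>UNIV. p k * inner (wb - ws) (Df k (W k)))"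
        by (simp add: Gb_def inner_sum_right)
      also have "\<dots> = (\<Sum>k\<in>UNIV. p k * inner (wb - W k) (Df k (W k)) + p k * inner (W k - ws) (Df k (W k)))"
        by (intro sum.cong refl) (simp add: inner_diff_left algebra_simps)
      finally show ?thesis by (simp add: P1_def P2_def sum.distrib)
    qed
    ultimately show ?thesis by (simp add: power_mult_distrib algebra_simps)
  qed
  have b: "(norm Gb)\<^sup>2 \<le> Gsq"
    using wvar[of UNIV p "\<lambda>k. Df k (W k)" 0] p1 p0 unfolding Gsq_def Gb_def
    by (simp add: sum_nonneg)
  have d: "- (2 * \<eta> * P1) \<le> Dv + \<eta>\<^sup>2 * Gsq"
  proof -
    have "\<And>k. - (2 * \<eta> * inner (wb - W k) (Df k (W k))) \<le> (norm (W k - wb))\<^sup>2 + \<eta>\<^sup>2 * (norm (Df k (W k)))\<^sup>2"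
    proof -
      fix k
      have "0 \<le> (norm ((wb - W k) + \<eta> *\<^sub>R Df k (W k)))\<^sup>2" by simp
      also have "\<dots> = (norm (wb - W k))\<^sup>2 + 2 * \<eta> * inner (wb - W k) (Df k (W k)) + \<eta>\<^sup>2 * (norm (Df k (W k)))\<^sup>2"
        by (simp add: norm_add_sq power_mult_distrib)
      finally show "- (2 * \<eta> * inner (wb - W k) (Df k (W k))) \<le> (norm (W k - wb))\<^sup>2 + \<eta>\<^sup>2 * (norm (Df k (W k)))\<^sup>2"
        by (simp add: norm_minus_commute)
    qed
    hence "(\<Sum>k\<in>UNIV. p k * - (2 * \<eta> * inner (wb - W k) (Df k (W k))))
        \<le> (\<Sum>k\<in>UNIV. p k * ((norm (W k - wb))\<^sup>2 + \<eta>\<^sup>2 * (norm (Df k (W k)))\<^sup>2))"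
      using p0 by (intro sum_mono mult_left_mono) auto
    moreover have "(\<Sum>k\<in>UNIV. p k * - (2 * \<eta> * inner (wb - W k) (Df k (W k)))) = - (2 * \<eta> * P1)"
      by (simp add: P1_def sum_distrib_left sum_negf mult.left_commute)
    moreover have "(\<Sum>k\<in>UNIV. p k * ((norm (W k - wb))\<^sup>2 + \<eta>\<^sup>2 * (norm (Df k (W k)))\<^sup>2)) = Dv + \<eta>\<^sup>2 * Gsq"
      by (simp add: Dv_def Gsq_def sum_distrib_left sum.distrib distrib_left mult.left_commute)
    ultimately show ?thesis by simp
  qed
  have e: "- P2 \<le> Fws - FW - \<mu> / 2 * Msq"
  proof -
    have "\<And>k. - inner (W k - ws) (Df k (W k)) \<le> F k ws - F k (W k) - \<mu> / 2 * (norm (W k - ws))\<^sup>2"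
    proof -
      fix k
      have "F k (W k) + inner (Df k (W k)) (ws - W k) + \<mu> / 2 * (norm (ws - W k))\<^sup>2 \<le> F k ws"
        by (rule sc)
      moreover have "inner (Df k (W k)) (ws - W k) = - inner (W k - ws) (Df k (W k))"
        by (simp add: inner_commute inner_diff_right inner_diff_left)
      ultimately show "- inner (W k - ws) (Df k (W k)) \<le> F k ws - F k (W k) - \<mu> / 2 * (norm (W k - ws))\<^sup>2"
        by (simp add: norm_minus_commute)
    qed
    hence "(\<Sum>k\<in>UNIV. p k * - inner (W k - ws) (Df k (W k)))
        \<le> (\<Sum>k\<in>UNIV. p k * (F k ws - F k (W k) - \<mu> / 2 * (norm (W k - ws))\<^sup>2))"
      using p0 by (intro sum_mono mult_left_mono) auto
    thus ?thesis by (simp add: P2_def Fws_def FW_def Msq_def sum_distrib_left sum.distrib algebra_simps sum_negf sum_subtractf)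
  qed
  have f: "A0 \<le> Msq"
    using wvar[of UNIV p W ws] p1 p0 unfolding Msq_def A0_def wb_def
    by (simp add: sum_nonneg)
  have g: "Gsq \<le> 2 * L * (FW - FS)"
  proof -
    have "Gsq \<le> (\<Sum>k\<in>UNIV. p k * (2 * L * (F k (W k) - Fs k)))"
      unfolding Gsq_def using p0 gb by (intro sum_mono mult_left_mono) auto
    thus ?thesis by (simp add: FW_def FS_def sum_distrib_left sum_subtractf algebra_simps)
  qed
  have hQ: "0 \<le> Dv + 2 * \<eta> * Q + \<eta>\<^sup>2 * Hsq"
  proof -
    have "\<And>k. 0 \<le> (norm (W k - wb))\<^sup>2 + 2 * \<eta> * inner (Df k wb) (W k - wb) + \<eta>\<^sup>2 * (norm (Df k wb))\<^sup>2"
    proof -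
      fix k
      have "0 \<le> (norm ((W k - wb) + \<eta> *\<^sub>R Df k wb))\<^sup>2" by simp
      also have "\<dots> = (norm (W k - wb))\<^sup>2 + 2 * \<eta> * inner (Df k wb) (W k - wb) + \<eta>\<^sup>2 * (norm (Df k wb))\<^sup>2"
        by (simp add: norm_add_sq power_mult_distrib inner_commute)
      finally show "0 \<le> (norm (W k - wb))\<^sup>2 + 2 * \<eta> * inner (Df k wb) (W k - wb) + \<eta>\<^sup>2 * (norm (Df k wb))\<^sup>2" .
    qed
    hence "0 \<le> (\<Sum>k\<in>UNIV. p k * ((norm (W k - wb))\<^sup>2 + 2 * \<eta> * inner (Df k wb) (W k - wb) + \<eta>\<^sup>2 * (norm (Df k wb))\<^sup>2))"
      using p0 by (intro sum_nonneg mult_nonneg_nonneg) auto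
    moreover have "(\<Sum>k\<in>UNIV. p k * ((norm (W k - wb))\<^sup>2 + 2 * \<eta> * inner (Df k wb) (W k - wb) + \<eta>\<^sup>2 * (norm (Df k wb))\<^sup>2))
      = Dv + 2 * \<eta> * Q + \<eta>\<^sup>2 * Hsq"
      by (simp add: Dv_def Q_def Hsq_def sum_distrib_left sum.distrib distrib_left mult.left_commute)
    ultimately show ?thesis by simp
  qed
  have hFQ: "Q \<le> FW - Fwb"
  proof -
    have "\<And>k. inner (Df k wb) (W k - wb) \<le> F k (W k) - F k wb"
    proof -
      fix k
      have "F k wb + inner (Df k wb) (W k - wb) + \<mu> / 2 * (norm (W k - wb))\<^sup>2 \<le> F k (W k)" by (rule sc)
      moreover have "0 \<le> \<mu> / 2 * (norm (W k - wb))\<^sup>2" using mu by simp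
      ultimately show "inner (Df k wb) (W k - wb) \<le> F k (W k) - F k wb" by linarith
    qed
    hence "Q \<le> (\<Sum>k\<in>UNIV. p k * (F k (W k) - F k wb))"
      unfolding Q_def using p0 by (intro sum_mono mult_left_mono) auto
    thus ?thesis by (simp add: FW_def Fwb_def sum_distrib_left sum_subtractf algebra_simps)
  qed
  have hH: "Hsq \<le> 2 * L * (Fwb - FS)"
  proof -
    have "Hsq \<le> (\<Sum>k\<in>UNIV. p k * (2 * L * (F k wb - Fs k)))"
      unfolding Hsq_def using p0 gb by (intro sum_mono mult_left_mono) auto
    thus ?thesis by (simp add: Fwb_def FS_def sum_distrib_left sum_subtractf algebra_simps)
  qed
  have T0: "0 \<le> Fwb - Fws" using opt[of wb] by (simp add: Fwb_def Fws_def)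
  define Gam where "Gam = Fws - FS"
  have Gam0': "0 \<le> Gam" using Gam0 by (simp add: Gam_def Fws_def FS_def)
  define T where "T = Fwb - Fws"
  define S where "S = FW - Fws"
  have X0: "0 \<le> 2 * \<eta> * (FW - Fwb) + 2 * \<eta>\<^sup>2 * L * (T + Gam) + Dv"
  proof -
    have "2 * \<eta> * Q \<le> 2 * \<eta> * (FW - Fwb)" using hFQ eta0 by simp
    moreover have "\<eta>\<^sup>2 * Hsq \<le> \<eta>\<^sup>2 * (2 * L * (Fwb - FS))" using hH by (simp add: mult_left_mono)
    moreover have "Fwb - FS = T + Gam" by (simp add: T_def Gam_def)
    ultimately show ?thesis using hQ by (simp add: algebra_simps power2_eq_square)
  qed
  have c1: "0 \<le> 1 - 2 * L * \<eta>" using etaL L0 eta0 by (simp add: algebra_simps)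
  have c2: "0 \<le> 1 - \<eta> * L" using etaL L0 eta0 by (simp add: algebra_simps)
  have Zb: "4 * L * \<eta>\<^sup>2 * (FW - FS) - 2 * \<eta> * (FW - Fws) \<le> 6 * L * \<eta>\<^sup>2 * Gam + Dv"
  proof -
    have id: "6 * L * \<eta>\<^sup>2 * Gam + Dv - (4 * L * \<eta>\<^sup>2 * (FW - FS) - 2 * \<eta> * (FW - Fws))
       = (1 - 2 * L * \<eta>) * (2 * \<eta> * (FW - Fwb) + 2 * \<eta>\<^sup>2 * L * (T + Gam) + Dv)
         + 4 * L\<^sup>2 * \<eta>^3 * Gam + 2 * L * \<eta> * Dv + 2 * \<eta> * (1 - 2 * L * \<eta>) * (1 - \<eta> * L) * T"
      by (simp add: T_def Gam_def algebra_simps power2_eq_square power3_eq_cube)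
    have "0 \<le> (1 - 2 * L * \<eta>) * (2 * \<eta> * (FW - Fwb) + 2 * \<eta>\<^sup>2 * L * (T + Gam) + Dv)"
      using c1 X0 by simp
    moreover have "0 \<le> 4 * L\<^sup>2 * \<eta>^3 * Gam" using eta0 Gam0' by simp
    moreover have "0 \<le> 2 * L * \<eta> * Dv" using L0 eta0 Dv0 by simp
    moreover have "0 \<le> 2 * \<eta> * (1 - 2 * L * \<eta>) * (1 - \<eta> * L) * T"
      using eta0 c1 c2 T0 by (simp add: T_def)
    ultimately show ?thesis using id by linarith
  qed
  have main: "(norm (wb - \<eta> *\<^sub>R Gb - ws))\<^sup>2 \<le> (1 - \<mu> * \<eta>) * A0 + 6 * L * \<eta>\<^sup>2 * Gam + 2 * Dv"
  proof -
    have e2: "- (2 * \<eta> * P2) \<le> 2 * \<eta> * (Fws - FW) - \<mu> * \<eta> * Msq"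
      using mult_left_mono[OF e, of "2 * \<eta>"] eta0 by (simp add: algebra_simps)
    have b2: "\<eta>\<^sup>2 * (norm Gb)\<^sup>2 \<le> \<eta>\<^sup>2 * Gsq" using b by (simp add: mult_left_mono)
    have f2: "\<mu> * \<eta> * A0 \<le> \<mu> * \<eta> * Msq" using f mu eta0 by (simp add: mult_left_mono)
    have g2: "2 * \<eta>\<^sup>2 * Gsq \<le> 4 * L * \<eta>\<^sup>2 * (FW - FS)"
      using mult_left_mono[OF g, of "2 * \<eta>\<^sup>2"] by (simp add: algebra_simps)
    have "(norm (wb - \<eta> *\<^sub>R Gb - ws))\<^sup>2 \<le> A0 + Dv + 2 * \<eta>\<^sup>2 * Gsq + 2 * \<eta> * (Fws - FW) - \<mu> * \<eta> * A0"
      using a d e2 b2 f2 by linarith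
    also have "\<dots> \<le> A0 + Dv + (4 * L * \<eta>\<^sup>2 * (FW - FS) - 2 * \<eta> * (FW - Fws)) - \<mu> * \<eta> * A0"
      using g2 by (simp add: algebra_simps)
    also have "\<dots> \<le> A0 + Dv + (6 * L * \<eta>\<^sup>2 * Gam + Dv) - \<mu> * \<eta> * A0"
      using Zb by linarith
    finally show ?thesis by (simp add: algebra_simps)
  qed
  thus ?thesis by (simp add: wb_def Gb_def A0_def Gam_def Fws_def FS_def Dv_def)
qed




lemma fsupp_pos: "0 < (m::nat) \<Longrightarrow> fsupp (pmf_of_set {..<m})"
proof -
  assume "0 < m" thus ?thesis by (subst set_pmf_of_set) auto
qed

lemma E_pmf_of_set_vec:
  fixes h :: "nat \<Rightarrow> 'b::{banach, second_countable_topology}"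
  assumes "0 < m"
  shows "measure_pmf.expectation (pmf_of_set {..<m}) h = (1 / real m) *\<^sub>R (\<Sum>j<m. h j)"
proof -
  have ne: "{..<m} \<noteq> {}" using assms by auto
  show ?thesis using assms ne by (subst E_sum) (auto simp: scaleR_sum_right fsupp_pos)
qed

lemma E_grad:
  fixes g :: "'k \<Rightarrow> nat \<Rightarrow> 'p \<Rightarrow> 'p::euclidean_space"
  assumes "0 < n k"
  shows "measure_pmf.expectation (pmf_of_set {..<n k}) (\<lambda>j. g k j w) = local_grad n g k w"
  using assms E_pmf_of_set_vec[OF assms, of "\<lambda>j. g k j w"] by (simp add: local_grad_def)

abbreviation Xi :: "('k::finite \<Rightarrow> nat) \<Rightarrow> ('k \<Rightarrow> nat) pmf" where
  "Xi n \<equiv> Pi_pmf UNIV 0 (\<lambda>k. pmf_of_set {..<n k})"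

lemma fsupp_Xi: "\<forall>k. 0 < n k \<Longrightarrow> fsupp (Xi n)"
  by (intro fsupp_Pi) (auto simp: fsupp_pos)

lemma E_Xi_sum:
  fixes h :: "'k::finite \<Rightarrow> nat \<Rightarrow> real"
  assumes "\<forall>k. 0 < n k"
  shows "measure_pmf.expectation (Xi n) (\<lambda>\<xi>. \<Sum>k\<in>UNIV. h k (\<xi> k))
       = (\<Sum>k\<in>UNIV. measure_pmf.expectation (pmf_of_set {..<n k}) (h k))"
  using assms fsupp_Xi[OF assms] by (simp add: E_sumf E_Pi_component)

definition Dvar :: "'k::finite pmf \<Rightarrow> ('k \<Rightarrow> 'p::real_inner) \<Rightarrow> real" where
  "Dvar P W = (\<Sum>k\<in>UNIV. pmf P k * (norm (W k - global_model P W))\<^sup>2)"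

lemma Dvar_nonneg: "0 \<le> Dvar P W"
  unfolding Dvar_def by (intro sum_nonneg) auto

lemma sum_pmf_UNIV: "(\<Sum>k\<in>UNIV. pmf (P::'k::finite pmf) k) = 1"
  by (rule sum_pmf_eq_1) auto

lemma gm_const: "global_model P (\<lambda>_. c) = c"
  by (simp add: global_model_def scaleR_sum_left[symmetric] sum_pmf_UNIV)

lemma Dvar_const: "Dvar P (\<lambda>_. c) = 0"
  by (simp add: Dvar_def gm_const)

lemma Dvar_le: "Dvar P W \<le> (\<Sum>k\<in>UNIV. pmf P k * (norm (W k - c))\<^sup>2)"
  using wvar[of UNIV "pmf P" W c] sum_pmf_UNIV[of P]
  by (simp add: Dvar_def global_model_def)

lemma stepA:
  fixes g :: "'k::finite \<Rightarrow> nat \<Rightarrow> 'p::euclidean_space \<Rightarrow> 'p"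
  assumes npos: "\<forall>k. 0 < n k"
  shows "measure_pmf.expectation (Xi n)
      (\<lambda>\<xi>. (norm (global_model P (\<lambda>k. W k - \<eta> *\<^sub>R g k (\<xi> k) (W k)) - ws))\<^sup>2)
    = (norm (global_model P W - \<eta> *\<^sub>R (\<Sum>k\<in>UNIV. pmf P k *\<^sub>R local_grad n g k (W k)) - ws))\<^sup>2
      + \<eta>\<^sup>2 * (\<Sum>k\<in>UNIV. (pmf P k)\<^sup>2 * measure_pmf.expectation (pmf_of_set {..<n k})
           (\<lambda>j. (norm (g k j (W k) - local_grad n g k (W k)))\<^sup>2))"
proof -
  define a where "a = global_model P W - \<eta> *\<^sub>R (\<Sum>k\<in>UNIV. pmf P k *\<^sub>R local_grad n g k (W k)) - ws"
  define Z where "Z = (\<lambda>k j. (- \<eta> * pmf P k) *\<^sub>R (g k j (W k) - local_grad n g k (W k)))"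
  have eq: "\<And>\<xi>. global_model P (\<lambda>k. W k - \<eta> *\<^sub>R g k (\<xi> k) (W k)) - ws = a + (\<Sum>k\<in>UNIV. Z k (\<xi> k))"
    by (simp add: global_model_def a_def Z_def scaleR_diff_right sum_subtractf scaleR_sum_right
        algebra_simps)
  have EZ: "\<And>k. measure_pmf.expectation (pmf_of_set {..<n k}) (Z k) = 0"
  proof -
    fix k
    have "measure_pmf.expectation (pmf_of_set {..<n k}) (Z k)
       = (- \<eta> * pmf P k) *\<^sub>R (measure_pmf.expectation (pmf_of_set {..<n k}) (\<lambda>j. g k j (W k)) - local_grad n g k (W k))"
      unfolding Z_def using npos fsupp_pos[of "n k"] by (simp add: E_diff)
    thus "measure_pmf.expectation (pmf_of_set {..<n k}) (Z k) = 0" using E_grad[of n k g] npos by simp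
  qed
  have "measure_pmf.expectation (Xi n) (\<lambda>\<xi>. (norm (global_model P (\<lambda>k. W k - \<eta> *\<^sub>R g k (\<xi> k) (W k)) - ws))\<^sup>2)
      = measure_pmf.expectation (Xi n) (\<lambda>\<xi>. (norm (a + (\<Sum>k\<in>UNIV. Z k (\<xi> k))))\<^sup>2)"
    by (simp add: eq)
  also have "\<dots> = (norm a)\<^sup>2 + (\<Sum>k\<in>UNIV. measure_pmf.expectation (pmf_of_set {..<n k}) (\<lambda>y. (norm (Z k y))\<^sup>2))"
    using npos EZ fsupp_pos by (intro E_Pi_sq) auto
  also have "(\<Sum>k\<in>UNIV. measure_pmf.expectation (pmf_of_set {..<n k}) (\<lambda>y. (norm (Z k y))\<^sup>2))
      = \<eta>\<^sup>2 * (\<Sum>k\<in>UNIV. (pmf P k)\<^sup>2 * measure_pmf.expectation (pmf_of_set {..<n k})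
           (\<lambda>j. (norm (g k j (W k) - local_grad n g k (W k)))\<^sup>2))"
  proof -
    have "\<And>k y. (norm (Z k y))\<^sup>2 = (\<eta>\<^sup>2 * (pmf P k)\<^sup>2) * (norm (g k y (W k) - local_grad n g k (W k)))\<^sup>2"
      by (simp only: Z_def norm_scaleR power_mult_distrib power2_abs) (simp add: power_mult_distrib)
    thus ?thesis by (simp add: sum_distrib_left mult.assoc)
  qed
  finally show ?thesis by (simp add: a_def)
qed

lemma sq_split:
  fixes a b :: "'p::real_inner"
  assumes "0 < s"
  shows "(norm (a - b))\<^sup>2 \<le> (1 + 1 / s) * (norm a)\<^sup>2 + (1 + s) * (norm b)\<^sup>2"
proof -
  have "0 \<le> (norm (a + s *\<^sub>R b))\<^sup>2" by simp
  hence "0 \<le> (norm a)\<^sup>2 + 2 * s * inner a b + s\<^sup>2 * (norm b)\<^sup>2"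
    by (simp add: norm_add_sq power_mult_distrib)
  hence "- (2 * s * inner a b) \<le> (norm a)\<^sup>2 + s\<^sup>2 * (norm b)\<^sup>2" by simp
  hence "- (2 * inner a b) \<le> (norm a)\<^sup>2 / s + s * (norm b)\<^sup>2"
    using assms by (simp add: field_simps power2_eq_square)
  moreover have "(norm (a - b))\<^sup>2 = (norm a)\<^sup>2 - 2 * inner a b + (norm b)\<^sup>2" by (rule norm_diff_sq)
  moreover have "(1 + 1 / s) * (norm a)\<^sup>2 + (1 + s) * (norm b)\<^sup>2 = (norm a)\<^sup>2 + (norm a)\<^sup>2 / s + (norm b)\<^sup>2 + s * (norm b)\<^sup>2"
    by (simp add: algebra_simps)
  ultimately show ?thesis by linarith
qed

lemma stepB:
  fixes g :: "'k::finite \<Rightarrow> nat \<Rightarrow> 'p::euclidean_space \<Rightarrow> 'p"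
  assumes npos: "\<forall>k. 0 < n k" and s: "0 < s"
  shows "measure_pmf.expectation (Xi n) (\<lambda>\<xi>. Dvar P (\<lambda>k. W k - \<eta> *\<^sub>R g k (\<xi> k) (W k)))
    \<le> (1 + 1 / s) * Dvar P W + (1 + s) * \<eta>\<^sup>2 * (\<Sum>k\<in>UNIV. pmf P k *
          measure_pmf.expectation (pmf_of_set {..<n k}) (\<lambda>j. (norm (g k j (W k)))\<^sup>2))"
proof -
  define c where "c = global_model P W"
  have "measure_pmf.expectation (Xi n) (\<lambda>\<xi>. Dvar P (\<lambda>k. W k - \<eta> *\<^sub>R g k (\<xi> k) (W k)))
     \<le> measure_pmf.expectation (Xi n) (\<lambda>\<xi>. \<Sum>k\<in>UNIV. pmf P k * (norm ((W k - c) - \<eta> *\<^sub>R g k (\<xi> k) (W k)))\<^sup>2)"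
    using fsupp_Xi[OF npos] by (intro E_mono) (auto intro: order_trans[OF Dvar_le] simp: algebra_simps)
  also have "\<dots> = (\<Sum>k\<in>UNIV. pmf P k * measure_pmf.expectation (pmf_of_set {..<n k})
        (\<lambda>j. (norm ((W k - c) - \<eta> *\<^sub>R g k j (W k)))\<^sup>2))"
    using E_Xi_sum[OF npos, of "\<lambda>k j. pmf P k * (norm ((W k - c) - \<eta> *\<^sub>R g k j (W k)))\<^sup>2"] by simp
  also have "\<dots> \<le> (\<Sum>k\<in>UNIV. pmf P k * measure_pmf.expectation (pmf_of_set {..<n k})
        (\<lambda>j. (1 + 1 / s) * (norm (W k - c))\<^sup>2 + (1 + s) * \<eta>\<^sup>2 * (norm (g k j (W k)))\<^sup>2))"
  proof (intro sum_mono mult_left_mono E_mono)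
    fix k j
    show "(norm ((W k - c) - \<eta> *\<^sub>R g k j (W k)))\<^sup>2 \<le> (1 + 1 / s) * (norm (W k - c))\<^sup>2 + (1 + s) * \<eta>\<^sup>2 * (norm (g k j (W k)))\<^sup>2"
      using sq_split[OF s, of "W k - c" "\<eta> *\<^sub>R g k j (W k)"] by (simp add: power_mult_distrib)
  qed (use npos fsupp_pos in auto)
  also have "\<dots> = (1 + 1 / s) * Dvar P W + (1 + s) * \<eta>\<^sup>2 * (\<Sum>k\<in>UNIV. pmf P k *
          measure_pmf.expectation (pmf_of_set {..<n k}) (\<lambda>j. (norm (g k j (W k)))\<^sup>2))"
  proof -
    have "\<And>k. measure_pmf.expectation (pmf_of_set {..<n k})
        (\<lambda>j. (1 + 1 / s) * (norm (W k - c))\<^sup>2 + (1 + s) * \<eta>\<^sup>2 * (norm (g k j (W k)))\<^sup>2)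
      = (1 + 1 / s) * (norm (W k - c))\<^sup>2 + (1 + s) * \<eta>\<^sup>2 * measure_pmf.expectation (pmf_of_set {..<n k}) (\<lambda>j. (norm (g k j (W k)))\<^sup>2)"
    proof -
      fix k
      have "fsupp (pmf_of_set {..<n k})" using npos fsupp_pos by auto
      thus "measure_pmf.expectation (pmf_of_set {..<n k})
        (\<lambda>j. (1 + 1 / s) * (norm (W k - c))\<^sup>2 + (1 + s) * \<eta>\<^sup>2 * (norm (g k j (W k)))\<^sup>2)
      = (1 + 1 / s) * (norm (W k - c))\<^sup>2 + (1 + s) * \<eta>\<^sup>2 * measure_pmf.expectation (pmf_of_set {..<n k}) (\<lambda>j. (norm (g k j (W k)))\<^sup>2)"
        by (subst E_add) auto
    qed
    hence "(\<Sum>k\<in>UNIV. pmf P k * measure_pmf.expectation (pmf_of_set {..<n k})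
        (\<lambda>j. (1 + 1 / s) * (norm (W k - c))\<^sup>2 + (1 + s) * \<eta>\<^sup>2 * (norm (g k j (W k)))\<^sup>2))
      = (\<Sum>k\<in>UNIV. (1 + 1 / s) * (pmf P k * (norm (W k - c))\<^sup>2) + (1 + s) * \<eta>\<^sup>2 * (pmf P k * measure_pmf.expectation (pmf_of_set {..<n k}) (\<lambda>j. (norm (g k j (W k)))\<^sup>2)))"
      by (simp add: distrib_left mult.left_commute)
    also have "\<dots> = (1 + 1 / s) * Dvar P W + (1 + s) * \<eta>\<^sup>2 * (\<Sum>k\<in>UNIV. pmf P k *
          measure_pmf.expectation (pmf_of_set {..<n k}) (\<lambda>j. (norm (g k j (W k)))\<^sup>2))"
      by (simp only: sum.distrib sum_distrib_left[symmetric] Dvar_def c_def)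
    finally show ?thesis .
  qed
  finally show ?thesis .
qed

lemma stepB0:
  fixes g :: "'k::finite \<Rightarrow> nat \<Rightarrow> 'p::euclidean_space \<Rightarrow> 'p"
  assumes npos: "\<forall>k. 0 < n k" and W: "W = (\<lambda>_. w)"
  shows "measure_pmf.expectation (Xi n) (\<lambda>\<xi>. Dvar P (\<lambda>k. W k - \<eta> *\<^sub>R g k (\<xi> k) (W k)))
    \<le> \<eta>\<^sup>2 * (\<Sum>k\<in>UNIV. pmf P k *
          measure_pmf.expectation (pmf_of_set {..<n k}) (\<lambda>j. (norm (g k j (W k)))\<^sup>2))"
proof -
  have "measure_pmf.expectation (Xi n) (\<lambda>\<xi>. Dvar P (\<lambda>k. W k - \<eta> *\<^sub>R g k (\<xi> k) (W k)))
     \<le> measure_pmf.expectation (Xi n) (\<lambda>\<xi>. \<Sum>k\<in>UNIV. pmf P k * (norm (\<eta> *\<^sub>R g k (\<xi> k) w))\<^sup>2)"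
    using fsupp_Xi[OF npos] W by (intro E_mono) (auto intro: order_trans[OF Dvar_le[where c = w]])
  also have "\<dots> = (\<Sum>k\<in>UNIV. pmf P k * measure_pmf.expectation (pmf_of_set {..<n k})
        (\<lambda>j. (norm (\<eta> *\<^sub>R g k j w))\<^sup>2))"
    using E_Xi_sum[OF npos, of "\<lambda>k j. pmf P k * (norm (\<eta> *\<^sub>R g k j w))\<^sup>2"] by simp
  also have "\<dots> = \<eta>\<^sup>2 * (\<Sum>k\<in>UNIV. pmf P k *
          measure_pmf.expectation (pmf_of_set {..<n k}) (\<lambda>j. (norm (g k j (W k)))\<^sup>2))"
    using W by (simp add: power_mult_distrib sum_distrib_left algebra_simps)
  finally show ?thesis .
qed

lemma stepC:
  fixes V :: "'k::finite \<Rightarrow> 'p::euclidean_space"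
  assumes K: "1 \<le> K"
  shows "measure_pmf.expectation (replicate_pmf K P) (\<lambda>S. (norm ((1 / real K) *\<^sub>R (\<Sum>j<K. V (S ! j)) - ws))\<^sup>2)
    = (norm (global_model P V - ws))\<^sup>2 + Dvar P V / real K"
proof -
  define m where "m = global_model P V"
  define Y where "Y = (\<lambda>k. (1 / real K) *\<^sub>R (V k - m))"
  have fP: "fsupp P" by simp
  have EV: "measure_pmf.expectation P V = m"
  proof -
    have "measure_pmf.expectation P V = (\<Sum>k\<in>UNIV. pmf P k *\<^sub>R V k)"
      by (intro integral_measure_pmf) auto
    thus ?thesis by (simp add: m_def global_model_def)
  qed
  have EY: "measure_pmf.expectation P Y = 0"
    unfolding Y_def using fP EV by (simp add: E_diff)
  have eq: "\<And>S. (1 / real K) *\<^sub>R (\<Sum>j<K. V (S ! j)) - ws = (m - ws) + (\<Sum>j<K. Y (S ! j))"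
  proof -
    fix S
    have "(\<Sum>j<K. Y (S ! j)) = (1 / real K) *\<^sub>R (\<Sum>j<K. V (S ! j)) - (1 / real K) *\<^sub>R (\<Sum>j<K. m)"
      by (simp add: Y_def scaleR_diff_right sum_subtractf scaleR_sum_right)
    also have "(1 / real K) *\<^sub>R (\<Sum>j<K. m) = m" using K by (simp add: sum_constant_scaleR)
    finally show "(1 / real K) *\<^sub>R (\<Sum>j<K. V (S ! j)) - ws = (m - ws) + (\<Sum>j<K. Y (S ! j))" by simp
  qed
  have "measure_pmf.expectation (replicate_pmf K P) (\<lambda>S. (norm ((1 / real K) *\<^sub>R (\<Sum>j<K. V (S ! j)) - ws))\<^sup>2)
     = (norm (m - ws))\<^sup>2 + real K * measure_pmf.expectation P (\<lambda>y. (norm (Y y))\<^sup>2)"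
    unfolding eq by (rule E_rep_sq[OF fP EY])
  also have "measure_pmf.expectation P (\<lambda>y. (norm (Y y))\<^sup>2) = (\<Sum>k\<in>UNIV. pmf P k * (norm (Y k))\<^sup>2)"
    by (subst integral_measure_pmf[of UNIV]) auto
  also have "real K * \<dots> = Dvar P V / real K"
  proof -
    have "\<And>k. (norm (Y k))\<^sup>2 = (1 / real K)\<^sup>2 * (norm (V k - m))\<^sup>2"
      by (simp only: Y_def norm_scaleR power_mult_distrib power2_abs)
    hence "real K * (\<Sum>k\<in>UNIV. pmf P k * (norm (Y k))\<^sup>2) = real K * (1 / real K)\<^sup>2 * Dvar P V"
      by (simp add: Dvar_def m_def sum_distrib_left mult.left_commute mult.assoc)
    also have "real K * (1 / real K)\<^sup>2 = 1 / real K" using K by (simp add: power2_eq_square)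
    finally show ?thesis by simp
  qed
  finally show ?thesis by (simp add: m_def)
qed




definition Vs :: "('k \<Rightarrow> nat \<Rightarrow> 'p \<Rightarrow> 'p) \<Rightarrow> real \<Rightarrow> ('k \<Rightarrow> 'p) \<Rightarrow> ('k \<Rightarrow> nat) \<Rightarrow> 'k \<Rightarrow> 'p::real_vector" where
  "Vs g \<eta> W \<xi> = (\<lambda>k. W k - \<eta> *\<^sub>R g k (\<xi> k) (W k))"

lemma fsupp_step:
  assumes "\<forall>k. 0 < n k"
  shows "fsupp (fedavg_step P n g eta E K t W)"
  unfolding fedavg_step_def Let_def
  using fsupp_Xi[OF assms] fsupp_rep[of P K]
  by (intro fsupp_bind) (auto simp: set_bind_pmf)

lemma step_sq:
  fixes g :: "'k::finite \<Rightarrow> nat \<Rightarrow> 'p::euclidean_space \<Rightarrow> 'p"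
  assumes npos: "\<forall>k. 0 < n k" and K: "1 \<le> K"
  shows "measure_pmf.expectation (fedavg_step P n g eta E K t W) (\<lambda>W'. (norm (global_model P W' - ws))\<^sup>2)
    = measure_pmf.expectation (Xi n) (\<lambda>\<xi>. (norm (global_model P (Vs g (eta t) W \<xi>) - ws))\<^sup>2
        + (if E dvd (t + 1) then Dvar P (Vs g (eta t) W \<xi>) / real K else 0))"
proof (cases "E dvd (t + 1)")
  case True
  have "measure_pmf.expectation (fedavg_step P n g eta E K t W) (\<lambda>W'. (norm (global_model P W' - ws))\<^sup>2)
     = measure_pmf.expectation (Xi n) (\<lambda>\<xi>. measure_pmf.expectation (replicate_pmf K P)
          (\<lambda>S. (norm ((1 / real K) *\<^sub>R (\<Sum>j<K. Vs g (eta t) W \<xi> (S ! j)) - ws))\<^sup>2))"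
    unfolding fedavg_step_def Let_def using True fsupp_Xi[OF npos] fsupp_rep[of P K]
    by (subst E_bind) (auto simp: E_bind gm_const Vs_def set_bind_pmf)
  also have "\<dots> = measure_pmf.expectation (Xi n) (\<lambda>\<xi>. (norm (global_model P (Vs g (eta t) W \<xi>) - ws))\<^sup>2
        + (if E dvd (t + 1) then Dvar P (Vs g (eta t) W \<xi>) / real K else 0))"
    using True K by (simp add: stepC)
  finally show ?thesis .
next
  case False
  show ?thesis
    unfolding fedavg_step_def Let_def using False fsupp_Xi[OF npos]
    by (subst E_bind) (auto simp: Vs_def)
qed

lemma step_D:
  fixes g :: "'k::finite \<Rightarrow> nat \<Rightarrow> 'p::euclidean_space \<Rightarrow> 'p"
  assumes npos: "\<forall>k. 0 < n k"
  shows "measure_pmf.expectation (fedavg_step P n g eta E K t W) (Dvar P)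
    = (if E dvd (t + 1) then 0 else measure_pmf.expectation (Xi n) (\<lambda>\<xi>. Dvar P (Vs g (eta t) W \<xi>)))"
proof (cases "E dvd (t + 1)")
  case True
  show ?thesis
    unfolding fedavg_step_def Let_def using True fsupp_Xi[OF npos] fsupp_rep[of P K]
    by (subst E_bind) (auto simp: E_bind Dvar_const set_bind_pmf)
next
  case False
  show ?thesis
    unfolding fedavg_step_def Let_def using False fsupp_Xi[OF npos]
    by (subst E_bind) (auto simp: Vs_def)
qed

lemma step_const:
  assumes "E dvd (t + 1)" "W' \<in> set_pmf (fedavg_step P n g eta E K t W)"
  shows "\<exists>c. W' = (\<lambda>_. c)"
  using assms unfolding fedavg_step_def Let_def by (auto simp: set_bind_pmf)

lemma round_Suc: "1 \<le> t \<Longrightarrow> fedavg_round P n g eta E K w1 (Suc t)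
   = fedavg_round P n g eta E K w1 t \<bind> fedavg_step P n g eta E K t"
  by (cases t) (auto simp: fedavg_round_def)

lemma round_1: "fedavg_round P n g eta E K w1 1 = return_pmf (\<lambda>_. w1)"
  by (simp add: fedavg_round_def)

lemma fsupp_round:
  assumes "\<forall>k. 0 < n k"
  shows "fsupp (fedavg_round P n g eta E K w1 t)"
proof -
  have "fsupp (fedavg_aux P n g eta E K w1 m)" for m
    by (induction m) (auto simp: fsupp_step[OF assms] intro!: fsupp_bind)
  thus ?thesis by (simp add: fedavg_round_def)
qed




lemma no_mult_gap:
  fixes E t0 t :: nat
  assumes "\<forall>u. t0 < u \<and> u \<le> t \<longrightarrow> \<not> E dvd u" "1 \<le> E"
  shows "t - t0 < E"
proof (rule ccontr)
  assume "\<not> t - t0 < E"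
  hence le: "t0 + E \<le> t" using assms(2) by arith
  define u where "u = E * (t0 div E) + E"
  have h: "E * (t0 div E) + t0 mod E = t0" by (rule mult_div_mod_eq)
  moreover have "t0 mod E < E" using assms by simp
  ultimately have "t0 < u" "u \<le> t0 + E" unfolding u_def by linarith+
  moreover have "E dvd u" by (simp add: u_def)
  ultimately show False using assms le by auto
qed

definition Sq :: "('k \<Rightarrow> nat) \<Rightarrow> ('k \<Rightarrow> nat \<Rightarrow> 'p \<Rightarrow> 'p::real_normed_vector) \<Rightarrow> 'k \<Rightarrow> ('k \<Rightarrow> 'p) \<Rightarrow> real" where
  "Sq n g k W = measure_pmf.expectation (pmf_of_set {..<n k}) (\<lambda>j. (norm (g k j (W k)))\<^sup>2)"

lemma Sq_nonneg: "0 \<le> Sq n g k W"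
  unfolding Sq_def by (intro E_nonneg) simp

lemma dv_bound:
  fixes g :: "'k::finite \<Rightarrow> nat \<Rightarrow> 'p::euclidean_space \<Rightarrow> 'p"
  assumes npos: "\<forall>k. 0 < n k"
    and eta0: "\<forall>i. 0 \<le> eta i" and anti: "\<forall>i j. i \<le> j \<longrightarrow> eta j \<le> eta i"
    and A4: "measure_pmf.expectation (fedavg_round P n g eta E K w1 t) (\<lambda>W. \<Sum>k\<in>UNIV. pmf P k * Sq n g k W) \<le> G\<^sup>2"
    and t0: "t0 \<le> t" "t0 = t \<longrightarrow> (\<forall>W\<in>set_pmf (fedavg_round P n g eta E K w1 t). \<exists>c. W = (\<lambda>_. c))"
    and d: "measure_pmf.expectation (fedavg_round P n g eta E K w1 t) (Dvar P) \<le> (real (t - t0))\<^sup>2 * (eta t0)\<^sup>2 * G\<^sup>2"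
  shows "measure_pmf.expectation (fedavg_round P n g eta E K w1 t)
     (\<lambda>W. measure_pmf.expectation (Xi n) (\<lambda>\<xi>. Dvar P (Vs g (eta t) W \<xi>))) \<le> (real (t - t0) + 1)\<^sup>2 * (eta t0)\<^sup>2 * G\<^sup>2"
proof -
  let ?R = "fedavg_round P n g eta E K w1 t"
  have fR: "fsupp ?R" by (rule fsupp_round[OF npos])
  have et: "(eta t)\<^sup>2 \<le> (eta t0)\<^sup>2" using eta0 anti t0 by (intro power_mono) auto
  have G0: "0 \<le> G\<^sup>2" by simp
  show ?thesis
  proof (cases "t0 = t")
    case True
    have "measure_pmf.expectation ?R (\<lambda>W. measure_pmf.expectation (Xi n) (\<lambda>\<xi>. Dvar P (Vs g (eta t) W \<xi>)))
        \<le> measure_pmf.expectation ?R (\<lambda>W. (eta t)\<^sup>2 * (\<Sum>k\<in>UNIV. pmf P k * Sq n g k W))"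
    proof (rule E_mono[OF fR])
      fix W assume "W \<in> set_pmf ?R"
      then obtain c where "W = (\<lambda>_. c)" using t0 True by auto
      thus "measure_pmf.expectation (Xi n) (\<lambda>\<xi>. Dvar P (Vs g (eta t) W \<xi>)) \<le> (eta t)\<^sup>2 * (\<Sum>k\<in>UNIV. pmf P k * Sq n g k W)"
        using stepB0[OF npos, of W c P "eta t" g] by (simp add: Vs_def Sq_def)
    qed
    also have "\<dots> \<le> (eta t)\<^sup>2 * G\<^sup>2" using A4 by (simp add: mult_left_mono)
    also have "\<dots> \<le> (real (t - t0) + 1)\<^sup>2 * (eta t0)\<^sup>2 * G\<^sup>2" using True by simp
    finally show ?thesis .
  next
    case False
    define s where "s = real (t - t0)"
    have s0: "0 < s" using False t0 by (simp add: s_def)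
    have "measure_pmf.expectation ?R (\<lambda>W. measure_pmf.expectation (Xi n) (\<lambda>\<xi>. Dvar P (Vs g (eta t) W \<xi>)))
        \<le> measure_pmf.expectation ?R (\<lambda>W. (1 + 1 / s) * Dvar P W + (1 + s) * (eta t)\<^sup>2 * (\<Sum>k\<in>UNIV. pmf P k * Sq n g k W))"
      using stepB[OF npos s0] by (intro E_mono[OF fR]) (simp add: Vs_def Sq_def)
    also have "\<dots> = (1 + 1 / s) * measure_pmf.expectation ?R (Dvar P)
        + (1 + s) * (eta t)\<^sup>2 * measure_pmf.expectation ?R (\<lambda>W. \<Sum>k\<in>UNIV. pmf P k * Sq n g k W)"
      using fR by (simp add: E_add)
    also have "\<dots> \<le> (1 + 1 / s) * (s\<^sup>2 * (eta t0)\<^sup>2 * G\<^sup>2) + (1 + s) * (eta t0)\<^sup>2 * G\<^sup>2"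
    proof (intro add_mono)
      show "(1 + 1 / s) * measure_pmf.expectation ?R (Dvar P) \<le> (1 + 1 / s) * (s\<^sup>2 * (eta t0)\<^sup>2 * G\<^sup>2)"
        using d s0 by (intro mult_left_mono) (auto simp: s_def)
      have "(1 + s) * (eta t)\<^sup>2 * measure_pmf.expectation ?R (\<lambda>W. \<Sum>k\<in>UNIV. pmf P k * Sq n g k W)
          \<le> (1 + s) * (eta t)\<^sup>2 * G\<^sup>2" using A4 s0 by (intro mult_left_mono) auto
      also have "\<dots> \<le> (1 + s) * (eta t0)\<^sup>2 * G\<^sup>2" using et s0 by (intro mult_right_mono mult_left_mono) auto
      finally show "(1 + s) * (eta t)\<^sup>2 * measure_pmf.expectation ?R (\<lambda>W. \<Sum>k\<in>UNIV. pmf P k * Sq n g k W)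
          \<le> (1 + s) * (eta t0)\<^sup>2 * G\<^sup>2" .
    qed
    also have "\<dots> = (s + 1)\<^sup>2 * (eta t0)\<^sup>2 * G\<^sup>2"
      using s0 by (simp add: field_simps power2_eq_square)
    finally show ?thesis by (simp add: s_def)
  qed
qed

lemma D_induct:
  fixes g :: "'k::finite \<Rightarrow> nat \<Rightarrow> 'p::euclidean_space \<Rightarrow> 'p"
  assumes npos: "\<forall>k. 0 < n k" and E1: "1 \<le> E"
    and eta0: "\<forall>i. 0 \<le> eta i" and anti: "\<forall>i j. i \<le> j \<longrightarrow> eta j \<le> eta i"
    and A4: "\<forall>s. 1 \<le> s \<longrightarrow> measure_pmf.expectation (fedavg_round P n g eta E K w1 s) (\<lambda>W. \<Sum>k\<in>UNIV. pmf P k * Sq n g k W) \<le> G\<^sup>2"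
  shows "1 \<le> t \<Longrightarrow> \<exists>t0. 1 \<le> t0 \<and> t0 \<le> t \<and> (\<forall>u. t0 < u \<and> u \<le> t \<longrightarrow> \<not> E dvd u)
     \<and> (t0 = t \<longrightarrow> (\<forall>W\<in>set_pmf (fedavg_round P n g eta E K w1 t). \<exists>c. W = (\<lambda>_. c)))
     \<and> measure_pmf.expectation (fedavg_round P n g eta E K w1 t) (Dvar P) \<le> (real (t - t0))\<^sup>2 * (eta t0)\<^sup>2 * G\<^sup>2"
proof (induction t rule: dec_induct[where i = 1, case_names base step])
  case base
  have r1: "fedavg_round P n g eta E K w1 (Suc 0) = return_pmf (\<lambda>_. w1)"
    using round_1[of P n g eta E K w1] by simp
  show ?case by (intro exI[of _ 1]) (auto simp: r1 Dvar_const)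
next
  case (step t)
  then obtain t0 where t0: "1 \<le> t0" "t0 \<le> t" "\<forall>u. t0 < u \<and> u \<le> t \<longrightarrow> \<not> E dvd u"
     "t0 = t \<longrightarrow> (\<forall>W\<in>set_pmf (fedavg_round P n g eta E K w1 t). \<exists>c. W = (\<lambda>_. c))"
     "measure_pmf.expectation (fedavg_round P n g eta E K w1 t) (Dvar P) \<le> (real (t - t0))\<^sup>2 * (eta t0)\<^sup>2 * G\<^sup>2"
    by blast
  let ?R = "fedavg_round P n g eta E K w1 t"
  have fR: "fsupp ?R" by (rule fsupp_round[OF npos])
  have RS: "fedavg_round P n g eta E K w1 (Suc t) = ?R \<bind> fedavg_step P n g eta E K t"
    using step by (simp add: round_Suc)
  have dS: "measure_pmf.expectation (fedavg_round P n g eta E K w1 (Suc t)) (Dvar P)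
     = measure_pmf.expectation ?R (\<lambda>W. if E dvd (t + 1) then 0 else measure_pmf.expectation (Xi n) (\<lambda>\<xi>. Dvar P (Vs g (eta t) W \<xi>)))"
    unfolding RS using fR fsupp_step[OF npos] by (subst E_bind) (auto simp: step_D[OF npos])
  show ?case
  proof (cases "E dvd (t + 1)")
    case True
    show ?thesis
    proof (intro exI[of _ "Suc t"] conjI)
      show "Suc t = Suc t \<longrightarrow> (\<forall>W\<in>set_pmf (fedavg_round P n g eta E K w1 (Suc t)). \<exists>c. W = (\<lambda>_. c))"
        unfolding RS using True step_const by (auto simp: set_bind_pmf)
      show "measure_pmf.expectation (fedavg_round P n g eta E K w1 (Suc t)) (Dvar P) \<le> (real (Suc t - Suc t))\<^sup>2 * (eta (Suc t))\<^sup>2 * G\<^sup>2"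
        using dS True by simp
    qed auto
  next
    case False
    have dv: "measure_pmf.expectation ?R (\<lambda>W. measure_pmf.expectation (Xi n) (\<lambda>\<xi>. Dvar P (Vs g (eta t) W \<xi>)))
       \<le> (real (t - t0) + 1)\<^sup>2 * (eta t0)\<^sup>2 * G\<^sup>2"
      using A4 step t0 by (intro dv_bound[OF npos eta0 anti]) auto
    show ?thesis
    proof (intro exI[of _ t0] conjI)
      show "\<forall>u. t0 < u \<and> u \<le> Suc t \<longrightarrow> \<not> E dvd u"
        using t0(3) False by (metis Suc_eq_plus1 le_Suc_eq)
      show "measure_pmf.expectation (fedavg_round P n g eta E K w1 (Suc t)) (Dvar P) \<le> (real (Suc t - t0))\<^sup>2 * (eta t0)\<^sup>2 * G\<^sup>2"
        using dS False dv t0(2) by (simp add: Suc_diff_le add.commute)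
    qed (use t0 in auto)
  qed
qed

lemma conv_rec:
  fixes \<Delta> :: "nat \<Rightarrow> real"
  assumes mu: "0 < \<mu>" and g1: "1 \<le> \<gamma>" and b0: "0 \<le> \<beta>"
    and vb: "4 * \<beta> / \<mu>\<^sup>2 \<le> v" and D1: "\<Delta> 1 \<le> v / (\<gamma> + 1)"
    and rec: "\<And>t. 1 \<le> t \<Longrightarrow> \<Delta> (Suc t) \<le> (1 - \<mu> * (2 / (\<mu> * (\<gamma> + real t)))) * \<Delta> t
                  + (2 / (\<mu> * (\<gamma> + real t)))\<^sup>2 * \<beta>"
  shows "1 \<le> t \<Longrightarrow> \<Delta> t \<le> v / (\<gamma> + real t)"
proof (induction t rule: dec_induct[where i = 1, case_names base step])
  case base
  then show ?case using D1 by simp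
next
  case (step t)
  define u where "u = \<gamma> + real t"
  have u2: "2 \<le> u" using g1 step by (simp add: u_def)
  have c0: "0 \<le> 1 - \<mu> * (2 / (\<mu> * u))" using mu u2 by (simp add: field_simps)
  have "\<Delta> (Suc t) \<le> (1 - \<mu> * (2 / (\<mu> * u))) * \<Delta> t + (2 / (\<mu> * u))\<^sup>2 * \<beta>"
    using rec[OF step(1)] by (simp add: u_def)
  also have "\<dots> \<le> (1 - \<mu> * (2 / (\<mu> * u))) * (v / u) + (2 / (\<mu> * u))\<^sup>2 * \<beta>"
    using step(3) c0 by (intro add_mono mult_left_mono) (auto simp: u_def)
  also have "(2 / (\<mu> * u))\<^sup>2 * \<beta> = (4 * \<beta> / \<mu>\<^sup>2) / u\<^sup>2"
    by (simp add: power2_eq_square field_simps)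
  also have "\<dots> \<le> v / u\<^sup>2" using vb u2 by (intro divide_right_mono) auto
  also have "(1 - \<mu> * (2 / (\<mu> * u))) * (v / u) + v / u\<^sup>2 = (u - 1) * v / u\<^sup>2"
    using mu u2 by (simp add: field_simps power2_eq_square)
  also have "\<dots> \<le> v / (u + 1)"
  proof -
    have v0: "0 \<le> v" using vb b0 mu by (meson order_trans divide_nonneg_nonneg mult_nonneg_nonneg zero_le_power2 zero_le_numeral)
    have "(u - 1) * (u + 1) \<le> u\<^sup>2" by (simp add: power2_eq_square algebra_simps)
    hence "(u - 1) * v * (u + 1) \<le> v * u\<^sup>2" using v0 by (metis mult.assoc mult.commute mult_left_mono)
    thus ?thesis using u2 by (simp add: field_simps)
  qed
  finally show ?case by (simp add: u_def algebra_simps)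
qed




lemma grad_local:
  fixes f :: "'k \<Rightarrow> nat \<Rightarrow> 'p::euclidean_space \<Rightarrow> real"
  assumes sgrad: "\<forall>k j w. j < n k \<longrightarrow> GDERIV (f k j) w :> g k j w"
  shows "GDERIV (local_loss n f k) w :> local_grad n g k w"
proof -
  have "FDERIV (\<lambda>w. \<Sum>j<n k. f k j w) w :> (\<lambda>h. \<Sum>j<n k. inner h (g k j w))"
    using sgrad unfolding gderiv_def by (intro has_derivative_sum) auto
  hence "FDERIV (\<lambda>w. (1 / real (n k)) * (\<Sum>j<n k. f k j w)) w :> (\<lambda>h. (1 / real (n k)) * (\<Sum>j<n k. inner h (g k j w)))"
    by (rule has_derivative_mult_right)
  moreover have "(\<lambda>w. (1 / real (n k)) * (\<Sum>j<n k. f k j w)) = local_loss n f k"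
    by (auto simp: local_loss_def fun_eq_iff)
  moreover have "(\<lambda>h. (1 / real (n k)) * (\<Sum>j<n k. inner h (g k j w))) = (\<lambda>h. inner h (local_grad n g k w))"
    by (auto simp: local_grad_def fun_eq_iff inner_sum_right)
  ultimately show ?thesis unfolding gderiv_def by simp
qed

lemma gderiv_unique:
  assumes "GDERIV F w :> D1" "GDERIV F w :> D2"
  shows "D1 = D2"
proof -
  have "(\<lambda>h. inner h D1) = (\<lambda>h. inner h D2)"
    using assms unfolding gderiv_def by (rule has_derivative_unique)
  hence "inner (D1 - D2) D1 = inner (D1 - D2) D2" by metis
  hence "inner (D1 - D2) (D1 - D2) = 0" by (simp add: inner_diff_right)
  thus ?thesis by simp
qed

lemma smooth_lip:
  assumes "L_smooth L F" "\<And>w. GDERIV F w :> Df w"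
  shows "norm (Df v - Df w) \<le> L * norm (v - w)"
proof -
  obtain D where D: "\<And>w. GDERIV F w :> D w" "\<And>v w. norm (D v - D w) \<le> L * norm (v - w)"
    using assms(1) unfolding L_smooth_def by blast
  have "\<And>w. D w = Df w" using D(1) assms(2) by (rule gderiv_unique)
  thus ?thesis using D(2)[of v w] by simp
qed

lemma L_ge_mu:
  fixes F :: "'p::euclidean_space \<Rightarrow> real"
  assumes D: "\<And>w. GDERIV F w :> Df w" and lip: "\<And>v w. norm (Df v - Df w) \<le> L * norm (v - w)"
    and sc: "strongly_convex \<mu> F"
  shows "\<mu> \<le> L"
proof -
  obtain b :: 'p where b: "b \<in> Basis" using nonempty_Basis by blast
  have nb: "norm b = 1" using b by simp
  have "F 0 + inner (Df 0) (b - 0) + \<mu> / 2 * (norm (b - 0))\<^sup>2 \<le> F b"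
    by (rule sc_first_order[OF D sc])
  moreover have "F b \<le> F 0 + inner (Df 0) (b - 0) + L / 2 * (norm (b - 0))\<^sup>2"
    by (rule descent[OF D lip])
  ultimately show ?thesis using nb by simp
qed

lemma bdd_grad:
  fixes F :: "'p::euclidean_space \<Rightarrow> real"
  assumes D: "\<And>w. GDERIV F w :> Df w" and lip: "\<And>v w. norm (Df v - Df w) \<le> L * norm (v - w)"
    and sc: "strongly_convex \<mu> F" and mu: "0 < \<mu>"
  shows "\<And>x. Inf (range F) \<le> F x"
    and "\<And>x. (norm (Df x))\<^sup>2 \<le> 2 * L * (F x - Inf (range F))"
proof -
  have bdd: "bdd_below (range F)"
  proof (rule bdd_belowI2)
    fix y
    have "F 0 + inner (Df 0) (y - 0) + \<mu> / 2 * (norm (y - 0))\<^sup>2 \<le> F y"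
      by (rule sc_first_order[OF D sc])
    moreover have "- (norm (Df 0))\<^sup>2 / (2 * \<mu>) \<le> inner (Df 0) y + \<mu> / 2 * (norm y)\<^sup>2"
    proof -
      have "0 \<le> (norm (Df 0 + \<mu> *\<^sub>R y))\<^sup>2" by simp
      also have "\<dots> = (norm (Df 0))\<^sup>2 + 2 * \<mu> * inner (Df 0) y + \<mu>\<^sup>2 * (norm y)\<^sup>2"
        by (simp add: norm_add_sq power_mult_distrib)
      finally have "0 \<le> (norm (Df 0))\<^sup>2 + 2 * \<mu> * inner (Df 0) y + \<mu>\<^sup>2 * (norm y)\<^sup>2" .
      hence "0 \<le> ((norm (Df 0))\<^sup>2 + 2 * \<mu> * inner (Df 0) y + \<mu>\<^sup>2 * (norm y)\<^sup>2) / (2 * \<mu>)"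
        using mu by simp
      also have "\<dots> = (norm (Df 0))\<^sup>2 / (2 * \<mu>) + (inner (Df 0) y + \<mu> / 2 * (norm y)\<^sup>2)"
        using mu by (simp add: field_simps power2_eq_square)
      finally show ?thesis by simp
    qed
    ultimately show "F 0 - (norm (Df 0))\<^sup>2 / (2 * \<mu>) \<le> F y" by simp
  qed
  show inf: "\<And>x. Inf (range F) \<le> F x" using bdd by (simp add: cInf_lower)
  have L0: "0 < L" using L_ge_mu[OF D lip sc] mu by simp
  fix x
  define y where "y = x - (1 / L) *\<^sub>R Df x"
  have "F y \<le> F x + inner (Df x) (y - x) + L / 2 * (norm (y - x))\<^sup>2"
    by (rule descent[OF D lip])
  also have "\<dots> = F x - (norm (Df x))\<^sup>2 / (2 * L)"
    using L0 by (simp add: y_def power_mult_distrib power2_norm_eq_inner field_simps power2_eq_square)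
       (metis power2_eq_square power2_norm_eq_inner)
  finally have "F y \<le> F x - (norm (Df x))\<^sup>2 / (2 * L)" .
  moreover have "Inf (range F) \<le> F y" by (rule inf)
  ultimately have "(norm (Df x))\<^sup>2 / (2 * L) \<le> F x - Inf (range F)" by simp
  thus "(norm (Df x))\<^sup>2 \<le> 2 * L * (F x - Inf (range F))"
    using L0 by (simp add: field_simps)
qed

theorem theorem2:
  fixes P :: "'k::finite pmf"
    and n :: "'k \<Rightarrow> nat"
    and f :: "'k \<Rightarrow> nat \<Rightarrow> 'p::euclidean_space \<Rightarrow> real"
    and g :: "'k \<Rightarrow> nat \<Rightarrow> 'p \<Rightarrow> 'p"
    and E K :: nat
    and L \<mu> G LR :: real
    and \<sigma> :: "'k \<Rightarrow> real"
    and w1 wstar :: 'p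
    and x :: "real ^ 'd"
    and R :: "'r \<Rightarrow> 'p \<Rightarrow> real ^ 'd"
    and Q :: "'r measure"
    and t :: nat
    and \<gamma> :: real and eta :: "nat \<Rightarrow> real" and \<Gamma> B C :: real
  defines gdef: "\<gamma> \<equiv> max (8 * L / \<mu>) (real E)"
    and etadef: "eta \<equiv> (\<lambda>s. 2 / (\<mu> * (\<gamma> + real s)))"
    and Gdef: "\<Gamma> \<equiv> global_loss P n f wstar - (\<Sum>k\<in>UNIV. pmf P k * Inf (range (local_loss n f k)))"
    and Bdef: "B \<equiv> (\<Sum>k\<in>UNIV. (pmf P k)\<^sup>2 * (\<sigma> k)\<^sup>2) + 6 * L * \<Gamma> + 8 * (real E - 1)\<^sup>2 * G\<^sup>2"
    and Cdef: "C \<equiv> 4 / real K * (real E)\<^sup>2 * G\<^sup>2"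
  assumes n_pos: "\<forall>k. 0 < n k"
    and sgrad: "\<forall>k j w. j < n k \<longrightarrow> GDERIV (f k j) w :> g k j w"
    and E_ge: "1 \<le> E"
    and K_ge: "1 \<le> K" and K_le: "K \<le> CARD('k)"
    and A1: "\<forall>k. L_smooth L (local_loss n f k)"
    and mu_pos: "0 < \<mu>"
    and A2: "\<forall>k. strongly_convex \<mu> (local_loss n f k)"
    and A3: "\<forall>k s. 1 \<le> s \<longrightarrow>
       measure_pmf.expectation (fedavg_round P n g eta E K w1 s)
         (\<lambda>W. measure_pmf.expectation (pmf_of_set {..<n k})
            (\<lambda>j. (norm (g k j (W k) - local_grad n g k (W k)))\<^sup>2)) \<le> (\<sigma> k)\<^sup>2"
    and A4: "\<forall>k s. 1 \<le> s \<longrightarrow>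
       measure_pmf.expectation (fedavg_round P n g eta E K w1 s)
         (\<lambda>W. measure_pmf.expectation (pmf_of_set {..<n k})
            (\<lambda>j. (norm (g k j (W k)))\<^sup>2)) \<le> G\<^sup>2"
    and wstar_min: "\<forall>w. global_loss P n f wstar \<le> global_loss P n f w"
    and x_box: "\<forall>i. 0 \<le> x $ i \<and> x $ i \<le> 1"
    and Q_prob: "prob_space Q"
    and R_meas: "\<forall>w. (\<lambda>r. R r w) \<in> borel_measurable Q"
    and R_lip: "\<forall>r. LR-lipschitz_on UNIV (R r)"
    and t_ge: "1 \<le> t"
  shows "(\<integral>\<^sup>+ W. (\<integral>\<^sup>+ r. ennreal ((norm (x - R r (global_model P W)))\<^sup>2) \<partial>Q)
            \<partial>measure_pmf (fedavg_round P n g eta E K w1 t))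
         \<le> 2 * (\<integral>\<^sup>+ r. ennreal ((norm (x - R r wstar))\<^sup>2) \<partial>Q)
           + ennreal (2 * LR\<^sup>2 / (\<gamma> + real t)
                * (4 * (B + C) / \<mu>\<^sup>2 + (\<gamma> + 1) * (norm (w1 - wstar))\<^sup>2))"
  proof -
  let ?R = "fedavg_round P n g eta E K w1"
  define F where "F = local_loss n f"
  define Df where "Df = local_grad n g"
  define Fs where "Fs = (\<lambda>k. Inf (range (F k)))"
  have D: "\<And>k w. GDERIV (F k) w :> Df k w"
    unfolding F_def Df_def using sgrad by (rule grad_local)
  have lip: "\<And>k v w. norm (Df k v - Df k w) \<le> L * norm (v - w)"
    using A1 D unfolding F_def by (intro smooth_lip) auto
  have sc: "\<And>k x y. F k x + inner (Df k x) (y - x) + \<mu> / 2 * (norm (y - x))\<^sup>2 \<le> F k y"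
    using A2 D unfolding F_def by (intro sc_first_order) auto
  obtain k0 :: 'k where True by blast
  have Lmu: "\<mu> \<le> L" using L_ge_mu[OF D lip] A2 unfolding F_def by auto
  have L0: "0 < L" using Lmu mu_pos by simp
  have Fs_le: "\<And>k x. Fs k \<le> F k x"
    unfolding Fs_def using bdd_grad(1)[OF D lip] A2 mu_pos unfolding F_def by auto
  have gb: "\<And>k x. (norm (Df k x))\<^sup>2 \<le> 2 * L * (F k x - Fs k)"
    unfolding Fs_def using bdd_grad(2)[OF D lip] A2 mu_pos unfolding F_def by auto
  have p0: "\<And>k. 0 \<le> pmf P k" by simp
  have p1: "sum (pmf P) UNIV = 1" by (rule sum_pmf_UNIV)
  have Gam_eq: "\<Gamma> = (\<Sum>k\<in>UNIV. pmf P k * F k wstar) - (\<Sum>k\<in>UNIV. pmf P k * Fs k)"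
    by (simp add: Gdef global_loss_def F_def Fs_def)
  have Gam0: "0 \<le> \<Gamma>"
  proof -
    have "(\<Sum>k\<in>UNIV. pmf P k * Fs k) \<le> (\<Sum>k\<in>UNIV. pmf P k * F k wstar)"
      using Fs_le by (intro sum_mono mult_left_mono) auto
    thus ?thesis using Gam_eq by simp
  qed
  have opt: "\<And>w. (\<Sum>k\<in>UNIV. pmf P k * F k wstar) \<le> (\<Sum>k\<in>UNIV. pmf P k * F k w)"
    using wstar_min by (simp add: global_loss_def F_def)
  have gE: "real E \<le> \<gamma>" and g8: "8 * L / \<mu> \<le> \<gamma>" by (simp_all add: gdef)
  have g1: "1 \<le> \<gamma>" using gE E_ge by simp
  have etapos: "\<And>s. 0 < eta s" using g1 mu_pos by (simp add: etadef)
  have eta0: "\<forall>i. 0 \<le> eta i" using etapos less_imp_le by blast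
  have anti: "\<forall>i j. i \<le> j \<longrightarrow> eta j \<le> eta i"
    using g1 mu_pos by (auto simp: etadef intro!: divide_left_mono mult_left_mono)
  have etaL: "\<And>s. 4 * L * eta s \<le> 1"
  proof -
    fix s
    have "8 * L \<le> \<mu> * \<gamma>" using g8 mu_pos by (simp add: field_simps)
    also have "\<dots> \<le> \<mu> * (\<gamma> + real s)" using mu_pos by simp
    finally have "8 * L \<le> \<mu> * (\<gamma> + real s)" .
    moreover have "0 < \<mu> * (\<gamma> + real s)" using mu_pos g1 by simp
    ultimately show "4 * L * eta s \<le> 1" by (simp add: etadef field_simps)
  qed
  have mueta: "\<And>s. \<mu> * eta s = 2 / (\<gamma> + real s)" using mu_pos by (simp add: etadef)
  have A4': "\<forall>s. 1 \<le> s \<longrightarrow> measure_pmf.expectation (?R s) (\<lambda>W. \<Sum>k\<in>UNIV. pmf P k * Sq n g k W) \<le> G\<^sup>2"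
  proof (intro allI impI)
    fix s :: nat assume s: "1 \<le> s"
    have "measure_pmf.expectation (?R s) (\<lambda>W. \<Sum>k\<in>UNIV. pmf P k * Sq n g k W)
        = (\<Sum>k\<in>UNIV. pmf P k * measure_pmf.expectation (?R s) (Sq n g k))"
      using fsupp_round[OF n_pos, of P g eta E K w1 s] by (subst E_sumf) auto
    also have "\<dots> \<le> (\<Sum>k\<in>UNIV. pmf P k * G\<^sup>2)"
      using A4 s by (intro sum_mono mult_left_mono) (auto simp: Sq_def[abs_def])
    also have "\<dots> = G\<^sup>2" using p1 by (simp add: sum_distrib_right[symmetric])
    finally show "measure_pmf.expectation (?R s) (\<lambda>W. \<Sum>k\<in>UNIV. pmf P k * Sq n g k W) \<le> G\<^sup>2" .
  qed
  define \<Delta> where "\<Delta> = (\<lambda>s. measure_pmf.expectation (?R s) (\<lambda>W. (norm (global_model P W - wstar))\<^sup>2))"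
  define v where "v = 4 * (B + C) / \<mu>\<^sup>2 + (\<gamma> + 1) * (norm (w1 - wstar))\<^sup>2"
  have BC0: "0 \<le> B + C"
    using Gam0 L0 by (simp add: Bdef Cdef sum_nonneg)
  have rec: "\<And>t. 1 \<le> t \<Longrightarrow> \<Delta> (Suc t) \<le> (1 - \<mu> * (2 / (\<mu> * (\<gamma> + real t)))) * \<Delta> t
                  + (2 / (\<mu> * (\<gamma> + real t)))\<^sup>2 * (B + C)"
  proof -
    fix t :: nat assume t: "1 \<le> t"
    define \<eta> where "\<eta> = eta t"
    have eta_eq: "\<eta> = 2 / (\<mu> * (\<gamma> + real t))" by (simp add: \<eta>_def etadef)
    obtain t0 where t0: "1 \<le> t0" "t0 \<le> t" "\<forall>u. t0 < u \<and> u \<le> t \<longrightarrow> \<not> E dvd u"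
       "t0 = t \<longrightarrow> (\<forall>W\<in>set_pmf (?R t). \<exists>c. W = (\<lambda>_. c))"
       "measure_pmf.expectation (?R t) (Dvar P) \<le> (real (t - t0))\<^sup>2 * (eta t0)\<^sup>2 * G\<^sup>2"
      using D_induct[OF n_pos E_ge eta0 anti A4' t] by blast
    have dv: "measure_pmf.expectation (?R t) (\<lambda>W. measure_pmf.expectation (Xi n) (\<lambda>\<xi>. Dvar P (Vs g (eta t) W \<xi>)))
        \<le> (real (t - t0) + 1)\<^sup>2 * (eta t0)\<^sup>2 * G\<^sup>2"
      using A4' t t0 by (intro dv_bound[OF n_pos eta0 anti]) auto
    have gap: "t - t0 < E" by (rule no_mult_gap[OF t0(3) E_ge])
    have gapr: "real (t - t0) \<le> real E - 1" using gap t0(2) by linarith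
    have e2: "eta t0 \<le> 2 * \<eta>"
    proof -
      have "real t \<le> \<gamma> + 2 * real t0" using gapr gE t0(2) by (simp add: of_nat_diff)
      hence "\<gamma> + real t \<le> 2 * (\<gamma> + real t0)" by simp
      hence "\<mu> * (\<gamma> + real t) \<le> \<mu> * (2 * (\<gamma> + real t0))" using mu_pos by (intro mult_left_mono) auto
      hence "\<mu> * (\<gamma> + real t) \<le> 2 * (\<mu> * (\<gamma> + real t0))" by (simp add: algebra_simps)
      moreover have "0 < \<mu> * (\<gamma> + real t0)" "0 < \<mu> * (\<gamma> + real t)" using mu_pos g1 by simp_all
      ultimately show ?thesis by (simp add: \<eta>_def etadef field_simps)
    qed
    have e0: "(eta t0)\<^sup>2 \<le> 4 * \<eta>\<^sup>2"
    proof -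
      have "(eta t0)\<^sup>2 \<le> (2 * \<eta>)\<^sup>2" using e2 eta0 by (intro power_mono) auto
      thus ?thesis by (simp add: power_mult_distrib)
    qed
    have dbound: "measure_pmf.expectation (?R t) (Dvar P) \<le> (real E - 1)\<^sup>2 * (4 * \<eta>\<^sup>2) * G\<^sup>2"
    proof -
      have "(real (t - t0))\<^sup>2 \<le> (real E - 1)\<^sup>2" using gapr by (intro power_mono) auto
      hence "(real (t - t0))\<^sup>2 * (eta t0)\<^sup>2 \<le> (real E - 1)\<^sup>2 * (4 * \<eta>\<^sup>2)"
        using e0 by (intro mult_mono) auto
      thus ?thesis using t0(5) by (meson mult_right_mono order_trans zero_le_power2)
    qed
    have dvbound: "measure_pmf.expectation (?R t) (\<lambda>W. measure_pmf.expectation (Xi n) (\<lambda>\<xi>. Dvar P (Vs g \<eta> W \<xi>)))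
        \<le> (real E)\<^sup>2 * (4 * \<eta>\<^sup>2) * G\<^sup>2"
    proof -
      have "(real (t - t0) + 1)\<^sup>2 \<le> (real E)\<^sup>2" using gapr by (intro power_mono) auto
      hence "(real (t - t0) + 1)\<^sup>2 * (eta t0)\<^sup>2 \<le> (real E)\<^sup>2 * (4 * \<eta>\<^sup>2)"
        using e0 by (intro mult_mono) auto
      thus ?thesis using dv unfolding \<eta>_def by (meson mult_right_mono order_trans zero_le_power2)
    qed
    have fR: "fsupp (?R t)" by (rule fsupp_round[OF n_pos])
    have fX: "fsupp (Xi n)" by (rule fsupp_Xi[OF n_pos])
    have RS: "?R (Suc t) = ?R t \<bind> fedavg_step P n g eta E K t" using t by (rule round_Suc)
    define c where "c = (E dvd (t + 1))"
    define h3 where "h3 = (\<lambda>W. \<Sum>k\<in>UNIV. (pmf P k)\<^sup>2 * measure_pmf.expectation (pmf_of_set {..<n k})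
           (\<lambda>j. (norm (g k j (W k) - local_grad n g k (W k)))\<^sup>2))"
    define h4 where "h4 = (\<lambda>W. measure_pmf.expectation (Xi n) (\<lambda>\<xi>. Dvar P (Vs g \<eta> W \<xi>)))"
    have "\<Delta> (Suc t) = measure_pmf.expectation (?R t) (\<lambda>W. measure_pmf.expectation (fedavg_step P n g eta E K t W)
        (\<lambda>W'. (norm (global_model P W' - wstar))\<^sup>2))"
      unfolding \<Delta>_def RS using fR fsupp_step[OF n_pos] by (subst E_bind) auto
    also have "\<dots> \<le> measure_pmf.expectation (?R t) (\<lambda>W. (1 - \<mu> * \<eta>) * (norm (global_model P W - wstar))\<^sup>2
        + 6 * L * \<eta>\<^sup>2 * \<Gamma> + 2 * Dvar P W + \<eta>\<^sup>2 * h3 W + (if c then h4 W / real K else 0))"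
    proof (rule E_mono[OF fR])
      fix W
      have "measure_pmf.expectation (fedavg_step P n g eta E K t W) (\<lambda>W'. (norm (global_model P W' - wstar))\<^sup>2)
          = measure_pmf.expectation (Xi n) (\<lambda>\<xi>. (norm (global_model P (Vs g \<eta> W \<xi>) - wstar))\<^sup>2)
            + (if c then h4 W / real K else 0)"
        unfolding step_sq[OF n_pos K_ge] c_def h4_def \<eta>_def
        using fX by (cases "E dvd (t + 1)") (simp_all add: E_add)
      also have "measure_pmf.expectation (Xi n) (\<lambda>\<xi>. (norm (global_model P (Vs g \<eta> W \<xi>) - wstar))\<^sup>2)
          = (norm (global_model P W - \<eta> *\<^sub>R (\<Sum>k\<in>UNIV. pmf P k *\<^sub>R local_grad n g k (W k)) - wstar))\<^sup>2
            + \<eta>\<^sup>2 * h3 W"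
        unfolding Vs_def h3_def by (rule stepA[OF n_pos])
      also have "(norm (global_model P W - \<eta> *\<^sub>R (\<Sum>k\<in>UNIV. pmf P k *\<^sub>R local_grad n g k (W k)) - wstar))\<^sup>2
          \<le> (1 - \<mu> * \<eta>) * (norm (global_model P W - wstar))\<^sup>2 + 6 * L * \<eta>\<^sup>2 * \<Gamma> + 2 * Dvar P W"
      proof -
        have "(norm ((\<Sum>k\<in>UNIV. pmf P k *\<^sub>R W k) - \<eta> *\<^sub>R (\<Sum>k\<in>UNIV. pmf P k *\<^sub>R Df k (W k)) - wstar))\<^sup>2
          \<le> (1 - \<mu> * \<eta>) * (norm ((\<Sum>k\<in>UNIV. pmf P k *\<^sub>R W k) - wstar))\<^sup>2
            + 6 * L * \<eta>\<^sup>2 * ((\<Sum>k\<in>UNIV. pmf P k * F k wstar) - (\<Sum>k\<in>UNIV. pmf P k * Fs k))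
            + 2 * (\<Sum>k\<in>UNIV. pmf P k * (norm (W k - (\<Sum>j\<in>UNIV. pmf P j *\<^sub>R W j)))\<^sup>2)"
          using p0 p1 sc mu_pos gb opt L0 etapos etaL Gam0 Gam_eq
          by (intro core) (auto simp: \<eta>_def less_imp_le)
        thus ?thesis by (simp add: Gam_eq Dvar_def global_model_def Df_def)
      qed
      finally show "measure_pmf.expectation (fedavg_step P n g eta E K t W) (\<lambda>W'. (norm (global_model P W' - wstar))\<^sup>2)
          \<le> (1 - \<mu> * \<eta>) * (norm (global_model P W - wstar))\<^sup>2
        + 6 * L * \<eta>\<^sup>2 * \<Gamma> + 2 * Dvar P W + \<eta>\<^sup>2 * h3 W + (if c then h4 W / real K else 0)" by simp
    qed
    also have "\<dots> = (1 - \<mu> * \<eta>) * \<Delta> t + 6 * L * \<eta>\<^sup>2 * \<Gamma> + 2 * measure_pmf.expectation (?R t) (Dvar P)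
        + \<eta>\<^sup>2 * measure_pmf.expectation (?R t) h3 + (if c then measure_pmf.expectation (?R t) h4 / real K else 0)"
      unfolding \<Delta>_def using fR by (cases c) (simp_all add: E_add)
    also have "\<dots> \<le> (1 - \<mu> * \<eta>) * \<Delta> t + \<eta>\<^sup>2 * (B + C)"
    proof -
      have h3b: "measure_pmf.expectation (?R t) h3 \<le> (\<Sum>k\<in>UNIV. (pmf P k)\<^sup>2 * (\<sigma> k)\<^sup>2)"
      proof -
        have "measure_pmf.expectation (?R t) h3 = (\<Sum>k\<in>UNIV. (pmf P k)\<^sup>2 * measure_pmf.expectation (?R t)
           (\<lambda>W. measure_pmf.expectation (pmf_of_set {..<n k}) (\<lambda>j. (norm (g k j (W k) - local_grad n g k (W k)))\<^sup>2)))"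
          unfolding h3_def using fR by (subst E_sumf) auto
        also have "\<dots> \<le> (\<Sum>k\<in>UNIV. (pmf P k)\<^sup>2 * (\<sigma> k)\<^sup>2)"
          using A3 t by (intro sum_mono mult_left_mono) auto
        finally show ?thesis .
      qed
      have T2: "2 * measure_pmf.expectation (?R t) (Dvar P) \<le> \<eta>\<^sup>2 * (8 * (real E - 1)\<^sup>2 * G\<^sup>2)"
        using dbound by (simp add: algebra_simps)
      have T3: "\<eta>\<^sup>2 * measure_pmf.expectation (?R t) h3 \<le> \<eta>\<^sup>2 * (\<Sum>k\<in>UNIV. (pmf P k)\<^sup>2 * (\<sigma> k)\<^sup>2)"
        using h3b by (simp add: mult_left_mono)
      have T4: "(if c then measure_pmf.expectation (?R t) h4 / real K else 0) \<le> \<eta>\<^sup>2 * C"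
      proof (cases c)
        case True
        have "measure_pmf.expectation (?R t) h4 / real K \<le> (real E)\<^sup>2 * (4 * \<eta>\<^sup>2) * G\<^sup>2 / real K"
          using dvbound K_ge unfolding h4_def by (simp add: divide_right_mono)
        also have "\<dots> = \<eta>\<^sup>2 * C" by (simp add: Cdef)
        finally show ?thesis using True by simp
      next
        case False
        have "0 \<le> C" by (simp add: Cdef)
        thus ?thesis using False by simp
      qed
      have "6 * L * \<eta>\<^sup>2 * \<Gamma> = \<eta>\<^sup>2 * (6 * L * \<Gamma>)" by simp
      moreover have "\<eta>\<^sup>2 * (B + C) = \<eta>\<^sup>2 * (\<Sum>k\<in>UNIV. (pmf P k)\<^sup>2 * (\<sigma> k)\<^sup>2) + \<eta>\<^sup>2 * (6 * L * \<Gamma>)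
           + \<eta>\<^sup>2 * (8 * (real E - 1)\<^sup>2 * G\<^sup>2) + \<eta>\<^sup>2 * C"
        by (simp add: Bdef algebra_simps)
      ultimately show ?thesis using T2 T3 T4 by linarith
    qed
    finally show "\<Delta> (Suc t) \<le> (1 - \<mu> * (2 / (\<mu> * (\<gamma> + real t)))) * \<Delta> t
                  + (2 / (\<mu> * (\<gamma> + real t)))\<^sup>2 * (B + C)" by (simp add: eta_eq)
  qed
  have conv: "\<Delta> t \<le> v / (\<gamma> + real t)"
  proof (rule conv_rec[OF mu_pos g1 BC0 _ _ rec t_ge])
    show "4 * (B + C) / \<mu>\<^sup>2 \<le> v" using g1 by (simp add: v_def)
    have r1: "?R (Suc 0) = return_pmf (\<lambda>_. w1)" by (simp add: fedavg_round_def)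
    have "\<Delta> 1 = (norm (w1 - wstar))\<^sup>2" by (simp add: \<Delta>_def r1 gm_const)
    moreover have "v / (\<gamma> + 1) = 4 * (B + C) / \<mu>\<^sup>2 / (\<gamma> + 1) + (norm (w1 - wstar))\<^sup>2"
      using g1 by (simp add: v_def add_divide_distrib)
    moreover have "0 \<le> 4 * (B + C) / \<mu>\<^sup>2 / (\<gamma> + 1)" using BC0 g1 by simp
    ultimately show "\<Delta> 1 \<le> v / (\<gamma> + 1)" by linarith
  qed
  have LR0: "0 \<le> LR" using R_lip lipschitz_on_nonneg by blast
  have pt: "\<And>r w. (norm (x - R r w))\<^sup>2 \<le> 2 * (norm (x - R r wstar))\<^sup>2 + 2 * LR\<^sup>2 * (norm (w - wstar))\<^sup>2"
  proof -
    fix r w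
    define a where "a = x - R r wstar"
    define b where "b = R r wstar - R r w"
    have "norm b \<le> LR * norm (w - wstar)"
      using lipschitz_onD[OF R_lip[rule_format, of r], of wstar w] by (simp add: b_def dist_norm norm_minus_commute)
    hence b2: "(norm b)\<^sup>2 \<le> LR\<^sup>2 * (norm (w - wstar))\<^sup>2"
      by (metis norm_ge_zero power_mono power_mult_distrib)
    have "0 \<le> (norm (a - b))\<^sup>2" by simp
    hence ab: "2 * inner a b \<le> (norm a)\<^sup>2 + (norm b)\<^sup>2" by (simp add: norm_diff_sq)
    have "x - R r w = a + b" by (simp add: a_def b_def)
    hence "(norm (x - R r w))\<^sup>2 = (norm a)\<^sup>2 + 2 * inner a b + (norm b)\<^sup>2" by (simp add: norm_add_sq)
    thus "(norm (x - R r w))\<^sup>2 \<le> 2 * (norm (x - R r wstar))\<^sup>2 + 2 * LR\<^sup>2 * (norm (w - wstar))\<^sup>2"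
      using ab b2 by (simp add: a_def)
  qed
  interpret Qp: prob_space Q by (rule Q_prob)
  have mR: "(\<lambda>r. R r wstar) \<in> borel_measurable Q" using R_meas by blast
  have mI: "(\<lambda>r. ennreal (2 * (norm (x - R r wstar))\<^sup>2)) \<in> borel_measurable Q"
    using mR by measurable
  define I where "I = (\<integral>\<^sup>+ r. ennreal ((norm (x - R r wstar))\<^sup>2) \<partial>Q)"
  have mI1: "(\<lambda>r. ennreal ((norm (x - R r wstar))\<^sup>2)) \<in> borel_measurable Q"
    using mR by measurable
  have inner: "\<And>W. (\<integral>\<^sup>+ r. ennreal ((norm (x - R r (global_model P W)))\<^sup>2) \<partial>Q)
      \<le> 2 * I + ennreal (2 * LR\<^sup>2 * (norm (global_model P W - wstar))\<^sup>2)"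
  proof -
    fix W
    have "(\<integral>\<^sup>+ r. ennreal ((norm (x - R r (global_model P W)))\<^sup>2) \<partial>Q)
       \<le> (\<integral>\<^sup>+ r. ennreal (2 * (norm (x - R r wstar))\<^sup>2) + ennreal (2 * LR\<^sup>2 * (norm (global_model P W - wstar))\<^sup>2) \<partial>Q)"
      using pt by (intro nn_integral_mono) (simp add: ennreal_plus[symmetric] del: ennreal_plus)
    also have "\<dots> = (\<integral>\<^sup>+ r. ennreal (2 * (norm (x - R r wstar))\<^sup>2) \<partial>Q) + ennreal (2 * LR\<^sup>2 * (norm (global_model P W - wstar))\<^sup>2)"
      using mI by (subst nn_integral_add) (auto simp: Qp.emeasure_space_1)
    also have "(\<integral>\<^sup>+ r. ennreal (2 * (norm (x - R r wstar))\<^sup>2) \<partial>Q) = 2 * I"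
      unfolding I_def using mI1 by (subst nn_integral_cmult[symmetric]) (auto simp: ennreal_mult)
    finally show "(\<integral>\<^sup>+ r. ennreal ((norm (x - R r (global_model P W)))\<^sup>2) \<partial>Q)
      \<le> 2 * I + ennreal (2 * LR\<^sup>2 * (norm (global_model P W - wstar))\<^sup>2)" .
  qed
  have fRt: "fsupp (?R t)" by (rule fsupp_round[OF n_pos])
  have "(\<integral>\<^sup>+ W. (\<integral>\<^sup>+ r. ennreal ((norm (x - R r (global_model P W)))\<^sup>2) \<partial>Q) \<partial>measure_pmf (?R t))
     \<le> (\<integral>\<^sup>+ W. 2 * I + ennreal (2 * LR\<^sup>2 * (norm (global_model P W - wstar))\<^sup>2) \<partial>measure_pmf (?R t))"
    using inner by (intro nn_integral_mono) auto
  also have "\<dots> = 2 * I + (\<integral>\<^sup>+ W. ennreal (2 * LR\<^sup>2 * (norm (global_model P W - wstar))\<^sup>2) \<partial>measure_pmf (?R t))"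
    by (subst nn_integral_add) (auto simp: measure_pmf.emeasure_space_1)
  also have "(\<integral>\<^sup>+ W. ennreal (2 * LR\<^sup>2 * (norm (global_model P W - wstar))\<^sup>2) \<partial>measure_pmf (?R t))
      = ennreal (measure_pmf.expectation (?R t) (\<lambda>W. 2 * LR\<^sup>2 * (norm (global_model P W - wstar))\<^sup>2))"
    using fRt by (intro nn_integral_eq_integral integrable_measure_pmf_finite) auto
  also have "measure_pmf.expectation (?R t) (\<lambda>W. 2 * LR\<^sup>2 * (norm (global_model P W - wstar))\<^sup>2) = 2 * LR\<^sup>2 * \<Delta> t"
    by (simp add: \<Delta>_def)
  also have "ennreal (2 * LR\<^sup>2 * \<Delta> t) \<le> ennreal (2 * LR\<^sup>2 / (\<gamma> + real t)
                * (4 * (B + C) / \<mu>\<^sup>2 + (\<gamma> + 1) * (norm (w1 - wstar))\<^sup>2))"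
  proof (rule ennreal_leI)
    have "2 * LR\<^sup>2 * \<Delta> t \<le> 2 * LR\<^sup>2 * (v / (\<gamma> + real t))" using conv by (intro mult_left_mono) auto
    thus "2 * LR\<^sup>2 * \<Delta> t \<le> 2 * LR\<^sup>2 / (\<gamma> + real t) * (4 * (B + C) / \<mu>\<^sup>2 + (\<gamma> + 1) * (norm (w1 - wstar))\<^sup>2)"
      by (simp add: v_def)
  qed
  finally show ?thesis by (simp add: I_def add_left_mono)
qed


end
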